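(* Let $m\ge 2$ and $0\le c<1$, and consider the best-worst rule $s=(c,m)$. A profile $x=((x^1,n_1),\dots,(x^q,n_q))$ with $q\ge 2$ is a non-convergent Nash equilibrium if and only if all of the following hold, where $I^p:=\ell(I_1^R)$: (i) $n_i\le 2$ for all $i\in[q]$, and $n_1=n_q=2$; (ii) $\ell(I_q^L)=I^p$, and for every $1<i<q$ with $n_i=2$ we have $\ell(I_i^L)=\ell(I_i^R)=I^p$; (iii) $\ell(I_1^L)=\ell(I_q^R)=I^p+\frac{c}{2}$; (iv) for every $i$ with $n_i=1$: $\ell(I_i)\ge \ell(I_k^L)$ for all $k\neq 1$ and $\ell(I_i)\ge \ell(I_k^R)$ for all $k\ne q$; (v) $I^p\ge \ell(I_k^L)$ for all $k\ne 1$ and $I^p\ge \ell(I_k^R)$ for all $k\ne q$.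
   Context: Setting: voters' ideal points are distributed uniformly (unit mass, Lebesgue measure) on $[0,1]$. There are $m$ candidates; a profile is $x=(x_1,\dots,x_m)\in[0,1]^m$. A voter with ideal point $y$ ranks candidates by distance $|x_i-y|$ (closer is better); ties are broken by a fair lottery (uniformly random strict order among tied candidates). Under the best-worst rule $s=(c,m)$ ($c\ge0$), a candidate receives $1$ point from each voter ranking her first, $-c$ from each voter ranking her last ($m$-th), and $0$ otherwise; $v_i(x)$ is candidate $i$'s expected total points. A (pure-strategy Nash) equilibrium is a profile $x^*$ with $v_i(x^* )\ge v_i(t,x^*_{-i})$ for all $i$ and $t\in[0,1]$ ($(t,x_{-i})$ is $x$ with $x_i$ replaced by $t$); it is non-convergent (NCNE) if at least two platforms are distinct. Notation: $[n]=\{1,\dots,n\}$. A profile determines its distinct occupied positions $x^1<x^2<\dots<x^q$, with $n_j$ the number of candidates at $x^j$; we write $x=((x^1,n_1),\dots,(x^q,n_q))$. For an interval $I=[a,b]$, $\ell(I)=b-a$. For $q\ge2$ the full-electorates are $I_1=[0,(x^1+x^2)/2]$, $I_i=[(x^{i-1}+x^i)/2,(x^i+x^{i+1})/2]$ for $2\le i\le q-1$, and $I_q=[(x^{q-1}+x^q)/2,1]$; the half-electorates are $I_i^L=\{y\in I_i: y\le x^i\}$ and $I_i^R=\{y\in I_i:y\ge x^i\}$. *)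

theory Defs
  imports "HOL-Analysis.Analysis"
begin

text \<open>Candidates are indexed by 0,...,m-1; a profile is a function x :: nat => real,
  only its values on {..<m} matter. Voters are uniform on [0,1].\<close>

definition is_profile :: "nat \<Rightarrow> (nat \<Rightarrow> real) \<Rightarrow> bool" where
  "is_profile m x \<longleftrightarrow> (\<forall>i<m. x i \<in> {0..1})"

definition closest :: "nat \<Rightarrow> (nat \<Rightarrow> real) \<Rightarrow> real \<Rightarrow> nat set" where
  "closest m x y = {j. j < m \<and> (\<forall>k<m. \<bar>x j - y\<bar> \<le> \<bar>x k - y\<bar>)}"

definition farthest :: "nat \<Rightarrow> (nat \<Rightarrow> real) \<Rightarrow> real \<Rightarrow> nat set" where
  "farthest m x y = {j. j < m \<and> (\<forall>k<m. \<bar>x k - y\<bar> \<le> \<bar>x j - y\<bar>)}"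

text \<open>Under a fair lottery over strict orders of tied candidates, the probability that i is
  ranked first is 1/|closest| if i is among the closest, and similarly for last place.\<close>
definition prob_first :: "nat \<Rightarrow> (nat \<Rightarrow> real) \<Rightarrow> nat \<Rightarrow> real \<Rightarrow> real" where
  "prob_first m x i y = (if i \<in> closest m x y then 1 / real (card (closest m x y)) else 0)"

definition prob_last :: "nat \<Rightarrow> (nat \<Rightarrow> real) \<Rightarrow> nat \<Rightarrow> real \<Rightarrow> real" where
  "prob_last m x i y = (if i \<in> farthest m x y then 1 / real (card (farthest m x y)) else 0)"

definition bw_score :: "real \<Rightarrow> nat \<Rightarrow> (nat \<Rightarrow> real) \<Rightarrow> nat \<Rightarrow> real \<Rightarrow> real" where
  "bw_score c m x i y = prob_first m x i y - c * prob_last m x i y"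

definition payoff :: "real \<Rightarrow> nat \<Rightarrow> (nat \<Rightarrow> real) \<Rightarrow> nat \<Rightarrow> real" where
  "payoff c m x i = integral {0..1} (bw_score c m x i)"

definition is_NE :: "real \<Rightarrow> nat \<Rightarrow> (nat \<Rightarrow> real) \<Rightarrow> bool" where
  "is_NE c m x \<longleftrightarrow> is_profile m x \<and>
     (\<forall>i<m. \<forall>t\<in>{0..1}. payoff c m (x(i := t)) i \<le> payoff c m x i)"

definition is_NCNE :: "real \<Rightarrow> nat \<Rightarrow> (nat \<Rightarrow> real) \<Rightarrow> bool" where
  "is_NCNE c m x \<longleftrightarrow> is_NE c m x \<and> (\<exists>i<m. \<exists>j<m. x i \<noteq> x j)"

text \<open>Distinct occupied positions x^1 < ... < x^q (1-based) and multiplicities n_k.\<close>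
definition positions :: "nat \<Rightarrow> (nat \<Rightarrow> real) \<Rightarrow> real set" where
  "positions m x = x ` {..<m}"

definition npos :: "nat \<Rightarrow> (nat \<Rightarrow> real) \<Rightarrow> nat" where
  "npos m x = card (positions m x)"

definition pos :: "nat \<Rightarrow> (nat \<Rightarrow> real) \<Rightarrow> nat \<Rightarrow> real" where
  "pos m x k = sorted_list_of_set (positions m x) ! (k - 1)"

definition nmult :: "nat \<Rightarrow> (nat \<Rightarrow> real) \<Rightarrow> nat \<Rightarrow> nat" where
  "nmult m x k = card {i. i < m \<and> x i = pos m x k}"

text \<open>Endpoints of the full-electorate I_k = [lbd k, rbd k] (for q >= 2).\<close>
definition lbd :: "nat \<Rightarrow> (nat \<Rightarrow> real) \<Rightarrow> nat \<Rightarrow> real" where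
  "lbd m x k = (if k = 1 then 0 else (pos m x (k - 1) + pos m x k) / 2)"

definition rbd :: "nat \<Rightarrow> (nat \<Rightarrow> real) \<Rightarrow> nat \<Rightarrow> real" where
  "rbd m x k = (if k = npos m x then 1 else (pos m x k + pos m x (k + 1)) / 2)"

definition lenI :: "nat \<Rightarrow> (nat \<Rightarrow> real) \<Rightarrow> nat \<Rightarrow> real" where
  "lenI m x k = rbd m x k - lbd m x k"

definition lenL :: "nat \<Rightarrow> (nat \<Rightarrow> real) \<Rightarrow> nat \<Rightarrow> real" where
  "lenL m x k = pos m x k - lbd m x k"

definition lenR :: "nat \<Rightarrow> (nat \<Rightarrow> real) \<Rightarrow> nat \<Rightarrow> real" where
  "lenR m x k = rbd m x k - pos m x k"

end

theory Submission
  imports Defs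
begin


definition lbv :: "real set \<Rightarrow> real \<Rightarrow> real" where
  "lbv A p = (if \<exists>a\<in>A. a < p then (Max {a\<in>A. a < p} + p) / 2 else 0)"
definition rbv :: "real set \<Rightarrow> real \<Rightarrow> real" where
  "rbv A p = (if \<exists>a\<in>A. p < a then (p + Min {a\<in>A. p < a}) / 2 else 1)"

lemma absdist_eq: "\<bar>a - y\<bar> = \<bar>b - y\<bar> \<Longrightarrow> a = b \<or> y = (a + b) / 2" for a b y :: real
  by (auto simp: abs_if split: if_splits)

lemma closest_iff:
  fixes A :: "real set"
  assumes fin: "finite A" and pA: "p \<in> A" and sub: "A \<subseteq> {0..1}"
    and y01: "0 < y" "y < 1" and nmid: "\<And>a. a \<in> A \<Longrightarrow> a \<noteq> p \<Longrightarrow> y \<noteq> (a + p) / 2"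
  shows "(\<forall>a\<in>A. \<bar>p - y\<bar> \<le> \<bar>a - y\<bar>) \<longleftrightarrow> lbv A p < y \<and> y < rbv A p"
proof
  assume H: "\<forall>a\<in>A. \<bar>p - y\<bar> \<le> \<bar>a - y\<bar>"
  have L: "lbv A p < y"
  proof (cases "\<exists>a\<in>A. a < p")
    case True
    let ?M = "Max {a\<in>A. a < p}"
    have "?M \<in> {a\<in>A. a < p}" using True fin by (intro Max_in) auto
    hence M: "?M \<in> A" "?M < p" by auto
    have "\<bar>p - y\<bar> \<le> \<bar>?M - y\<bar>" using H M by auto
    moreover have "y \<noteq> (?M + p) / 2" using nmid M by auto
    ultimately show ?thesis using True M by (auto simp: lbv_def abs_if split: if_splits)
  next
    case False then show ?thesis using y01 by (simp add: lbv_def)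
  qed
  have R: "y < rbv A p"
  proof (cases "\<exists>a\<in>A. p < a")
    case True
    let ?M = "Min {a\<in>A. p < a}"
    have "?M \<in> {a\<in>A. p < a}" using True fin by (intro Min_in) auto
    hence M: "?M \<in> A" "p < ?M" by auto
    have "\<bar>p - y\<bar> \<le> \<bar>?M - y\<bar>" using H M by auto
    moreover have "y \<noteq> (?M + p) / 2" using nmid M by auto
    ultimately show ?thesis using True M by (auto simp: rbv_def abs_if split: if_splits)
  next
    case False then show ?thesis using y01 by (simp add: rbv_def)
  qed
  show "lbv A p < y \<and> y < rbv A p" using L R by simp
next
  assume H: "lbv A p < y \<and> y < rbv A p"
  show "\<forall>a\<in>A. \<bar>p - y\<bar> \<le> \<bar>a - y\<bar>"
  proof
    fix a assume aA: "a \<in> A"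
    consider "a < p" | "a = p" | "p < a" by linarith
    then show "\<bar>p - y\<bar> \<le> \<bar>a - y\<bar>"
    proof cases
      case 1
      have "a \<le> Max {a\<in>A. a < p}" using fin aA 1 by (intro Max_ge) auto
      moreover have "lbv A p = (Max {a\<in>A. a < p} + p) / 2" using aA 1 by (auto simp: lbv_def)
      ultimately show ?thesis using H 1 by (auto simp: abs_if)
    next
      case 3
      have "a \<ge> Min {a\<in>A. p < a}" using fin aA 3 by (intro Min_le) auto
      moreover have "rbv A p = (p + Min {a\<in>A. p < a}) / 2" using aA 3 by (auto simp: rbv_def)
      ultimately show ?thesis using H 3 by (auto simp: abs_if)
    qed simp
  qed
qed

lemma farthest_iff:
  fixes A :: "real set"
  assumes fin: "finite A" and pA: "p \<in> A" and lohi: "Min A < Max A"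
    and nmid: "y \<noteq> (Min A + Max A) / 2"
  shows "(\<forall>a\<in>A. \<bar>a - y\<bar> \<le> \<bar>p - y\<bar>) \<longleftrightarrow>
     (p = Min A \<and> (Min A + Max A) / 2 < y) \<or> (p = Max A \<and> y < (Min A + Max A) / 2)"
proof -
  have ne: "A \<noteq> {}" using pA by auto
  have lo: "Min A \<in> A" and hi: "Max A \<in> A" using fin ne by auto
  have bnd: "Min A \<le> a \<and> a \<le> Max A" if "a \<in> A" for a using fin that by auto
  show ?thesis
  proof
    assume H: "\<forall>a\<in>A. \<bar>a - y\<bar> \<le> \<bar>p - y\<bar>"
    have h1: "\<bar>Min A - y\<bar> \<le> \<bar>p - y\<bar>" "\<bar>Max A - y\<bar> \<le> \<bar>p - y\<bar>" using H lo hi by auto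
    have "Min A \<le> p" "p \<le> Max A" using bnd pA by auto
    then show "(p = Min A \<and> (Min A + Max A) / 2 < y) \<or> (p = Max A \<and> y < (Min A + Max A) / 2)"
      using h1 lohi nmid by (auto simp: abs_if split: if_splits)
  next
    assume H: "(p = Min A \<and> (Min A + Max A) / 2 < y) \<or> (p = Max A \<and> y < (Min A + Max A) / 2)"
    show "\<forall>a\<in>A. \<bar>a - y\<bar> \<le> \<bar>p - y\<bar>"
    proof
      fix a assume "a \<in> A"
      then have "Min A \<le> a" "a \<le> Max A" using bnd by auto
      then show "\<bar>a - y\<bar> \<le> \<bar>p - y\<bar>" using H by (auto simp: abs_if)
    qed
  qed
qed



definition exc :: "real set \<Rightarrow> real set" where
  "exc A = {0,1} \<union> (\<lambda>(a,b). (a + b) / 2) ` (A \<times> A)"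

lemma mid_exc: "a \<in> A \<Longrightarrow> b \<in> A \<Longrightarrow> (a + b) / 2 \<in> exc A"
  unfolding exc_def by (rule UnI2, rule image_eqI[where x="(a,b)"]) auto

lemma finite_exc: "finite A \<Longrightarrow> finite (exc A)"
  by (simp add: exc_def)

lemma prob_first_eq:
  assumes prof: "is_profile m x" and i: "i < m"
    and y: "y \<in> {0..1} - exc (x ` {..<m})"
  shows "prob_first m x i y =
    (if lbv (x ` {..<m}) (x i) < y \<and> y < rbv (x ` {..<m}) (x i)
     then 1 / real (card {j. j < m \<and> x j = x i}) else 0)"
proof -
  let ?A = "x ` {..<m}"
  have fin: "finite ?A" by simp
  have sub: "?A \<subseteq> {0..1}" using prof by (auto simp: is_profile_def)
  have y01: "0 < y" "y < 1" using y by (auto simp: exc_def)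
  have nm: "y \<noteq> (a + b) / 2" if "a \<in> ?A" "b \<in> ?A" for a b
    using y mid_exc[OF that] by (metis DiffD2)
  have iff: "i \<in> closest m x y \<longleftrightarrow> lbv ?A (x i) < y \<and> y < rbv ?A (x i)"
  proof -
    have "i \<in> closest m x y \<longleftrightarrow> (\<forall>a\<in>?A. \<bar>x i - y\<bar> \<le> \<bar>a - y\<bar>)"
      using i by (auto simp: closest_def)
    also have "\<dots> \<longleftrightarrow> lbv ?A (x i) < y \<and> y < rbv ?A (x i)"
      by (rule closest_iff[OF fin _ sub y01]) (use i nm in auto)
    finally show ?thesis .
  qed
  have cl: "closest m x y = {j. j < m \<and> x j = x i}" if "i \<in> closest m x y"
  proof
    show "closest m x y \<subseteq> {j. j < m \<and> x j = x i}"
    proof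
      fix j assume j: "j \<in> closest m x y"
      then have "\<bar>x j - y\<bar> = \<bar>x i - y\<bar>" using that i by (auto simp: closest_def intro: antisym)
      then have "x j = x i \<or> y = (x j + x i) / 2" by (rule absdist_eq)
      then show "j \<in> {j. j < m \<and> x j = x i}" using nm[of "x j" "x i"] j i by (auto simp: closest_def)
    qed
    show "{j. j < m \<and> x j = x i} \<subseteq> closest m x y" using that by (auto simp: closest_def)
  qed
  show ?thesis using iff cl by (auto simp: prob_first_def)
qed

lemma prob_last_eq:
  assumes prof: "is_profile m x" and i: "i < m"
    and y: "y \<in> {0..1} - exc (x ` {..<m})"
    and lohi: "Min (x ` {..<m}) < Max (x ` {..<m})"
  shows "prob_last m x i y =
    (if (x i = Min (x ` {..<m}) \<and> (Min (x ` {..<m}) + Max (x ` {..<m})) / 2 < y) \<or>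
        (x i = Max (x ` {..<m}) \<and> y < (Min (x ` {..<m}) + Max (x ` {..<m})) / 2)
     then 1 / real (card {j. j < m \<and> x j = x i}) else 0)"
proof -
  let ?A = "x ` {..<m}"
  have fin: "finite ?A" by simp
  have ne: "?A \<noteq> {}" using i by auto
  have nm: "y \<noteq> (a + b) / 2" if "a \<in> ?A" "b \<in> ?A" for a b
    using y mid_exc[OF that] by (metis DiffD2)
  have iff: "i \<in> farthest m x y \<longleftrightarrow> (x i = Min ?A \<and> (Min ?A + Max ?A) / 2 < y) \<or>
        (x i = Max ?A \<and> y < (Min ?A + Max ?A) / 2)" (is "_ \<longleftrightarrow> ?R")
  proof -
    have "i \<in> farthest m x y \<longleftrightarrow> (\<forall>a\<in>?A. \<bar>a - y\<bar> \<le> \<bar>x i - y\<bar>)"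
      using i by (auto simp: farthest_def)
    also have "\<dots> \<longleftrightarrow> ?R"
      by (rule farthest_iff[OF fin _ lohi]) (use i nm fin ne in auto)
    finally show ?thesis .
  qed
  have cl: "farthest m x y = {j. j < m \<and> x j = x i}" if "i \<in> farthest m x y"
  proof
    show "farthest m x y \<subseteq> {j. j < m \<and> x j = x i}"
    proof
      fix j assume j: "j \<in> farthest m x y"
      then have "\<bar>x j - y\<bar> = \<bar>x i - y\<bar>" using that i by (auto simp: farthest_def intro: antisym)
      then have "x j = x i \<or> y = (x j + x i) / 2" by (rule absdist_eq)
      then show "j \<in> {j. j < m \<and> x j = x i}" using nm[of "x j" "x i"] j i by (auto simp: farthest_def)
    qed
    show "{j. j < m \<and> x j = x i} \<subseteq> farthest m x y" using that by (auto simp: farthest_def)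
  qed
  show ?thesis using iff cl by (auto simp: prob_last_def)
qed

lemma has_integral_ind:
  fixes a b k :: real
  assumes "0 \<le> a" "a \<le> b" "b \<le> 1"
  shows "((\<lambda>y. if a < y \<and> y < b then k else 0) has_integral k * (b - a)) {0..1}"
proof -
  have "((\<lambda>y. k) has_integral k * (b - a)) {a..b}"
    using has_integral_const_real[of k a b] assms by (simp add: mult.commute)
  then have "((\<lambda>y. if y \<in> cbox a b then k else 0) has_integral k * (b - a)) (cbox 0 1)"
    by (intro has_integral_restrict_closed_subinterval) (use assms in auto)
  then have h: "((\<lambda>y. if y \<in> {a..b} then k else 0) has_integral k * (b - a)) {0..1}" by simp
  show ?thesis
    by (rule has_integral_spike_finite[OF _ _ h, of "{a,b}"]) auto
qed



lemma lbv_rbv_bounds: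
  assumes fin: "finite A" and sub: "A \<subseteq> {0..1}" and pA: "p \<in> A"
  shows "0 \<le> lbv A p" "lbv A p \<le> p" "p \<le> rbv A p" "rbv A p \<le> 1"
proof -
  have p01: "0 \<le> p" "p \<le> 1" using sub pA by auto
  show "0 \<le> lbv A p" "lbv A p \<le> p"
  proof -
    have "0 \<le> lbv A p \<and> lbv A p \<le> p"
    proof (cases "\<exists>a\<in>A. a < p")
      case True
      have "Max {a\<in>A. a < p} \<in> {a\<in>A. a < p}" using True fin by (intro Max_in) auto
      then show ?thesis using True sub p01 by (auto simp: lbv_def)
    qed (use p01 in \<open>auto simp: lbv_def\<close>)
    then show "0 \<le> lbv A p" "lbv A p \<le> p" by auto
  qed
  show "p \<le> rbv A p" "rbv A p \<le> 1"
  proof -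
    have "p \<le> rbv A p \<and> rbv A p \<le> 1"
    proof (cases "\<exists>a\<in>A. p < a")
      case True
      have "Min {a\<in>A. p < a} \<in> {a\<in>A. p < a}" using True fin by (intro Min_in) auto
      then show ?thesis using True sub p01 by (auto simp: rbv_def)
    qed (use p01 in \<open>auto simp: rbv_def\<close>)
    then show "p \<le> rbv A p" "rbv A p \<le> 1" by auto
  qed
qed

definition Lam :: "real set \<Rightarrow> real \<Rightarrow> real" where
  "Lam A p = (if p = Min A then 1 - (Min A + Max A) / 2 else if p = Max A then (Min A + Max A) / 2 else 0)"

definition mltp :: "nat \<Rightarrow> (nat \<Rightarrow> real) \<Rightarrow> real \<Rightarrow> nat" where
  "mltp m x p = card {j. j < m \<and> x j = p}"

lemma payoff_formula:
  assumes prof: "is_profile m x" and i: "i < m"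
    and lohi: "Min (x ` {..<m}) < Max (x ` {..<m})"
  shows "payoff c m x i = (rbv (x ` {..<m}) (x i) - lbv (x ` {..<m}) (x i)) / real (mltp m x (x i))
           - c * Lam (x ` {..<m}) (x i) / real (mltp m x (x i))"
proof -
  let ?A = "x ` {..<m}"
  define n where "n = real (mltp m x (x i))"
  define lb where "lb = lbv ?A (x i)"
  define rb where "rb = rbv ?A (x i)"
  define mid where "mid = (Min ?A + Max ?A) / 2"
  define la where "la = (if x i = Min ?A then mid else 0)"
  define ra where "ra = (if x i = Min ?A then 1 else if x i = Max ?A then mid else 0)"
  have fin: "finite ?A" by simp
  have ne: "?A \<noteq> {}" using i by auto
  have sub: "?A \<subseteq> {0..1}" using prof by (auto simp: is_profile_def)
  have pA: "x i \<in> ?A" using i by auto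
  have b: "0 \<le> lb" "lb \<le> rb" "rb \<le> 1"
    using lbv_rbv_bounds[OF fin sub pA] unfolding lb_def rb_def by linarith+
  have mm: "Min ?A \<in> ?A" "Max ?A \<in> ?A" using fin ne by auto
  have "Min ?A \<in> {0..1}" "Max ?A \<in> {0..1}" using mm sub by blast+
  then have mid01: "0 \<le> mid" "mid \<le> 1" unfolding mid_def by auto
  have b2: "0 \<le> la" "la \<le> ra" "ra \<le> 1" using mid01 unfolding la_def ra_def by auto
  define g where "g y = (if lb < y \<and> y < rb then 1 / n else 0) - c * (if la < y \<and> y < ra then 1 / n else 0)" for y
  have int: "(g has_integral (1/n * (rb - lb) - c * (1/n * (ra - la)))) {0..1}"
    unfolding g_def
    by (intro has_integral_diff has_integral_mult_right has_integral_ind b b2)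
  have eq: "bw_score c m x i y = g y" if y: "y \<in> {0..1} - exc ?A" for y
  proof -
    have y01: "0 < y" "y < 1" using y by (auto simp: exc_def)
    have "((x i = Min ?A \<and> mid < y) \<or> (x i = Max ?A \<and> y < mid)) \<longleftrightarrow> la < y \<and> y < ra"
      using lohi y01 unfolding la_def ra_def by auto
    then show ?thesis
      unfolding bw_score_def g_def
      using prob_first_eq[OF prof i y] prob_last_eq[OF prof i y lohi]
      unfolding n_def lb_def rb_def mid_def mltp_def by simp
  qed
  have "(bw_score c m x i has_integral (1/n * (rb - lb) - c * (1/n * (ra - la)))) {0..1}"
    by (rule has_integral_spike_finite[OF finite_exc[OF fin] eq int])
  then have "payoff c m x i = 1/n * (rb - lb) - c * (1/n * (ra - la))"
    unfolding payoff_def by (rule integral_unique)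
  moreover have "ra - la = Lam ?A (x i)"
    using lohi unfolding ra_def la_def Lam_def mid_def by auto
  ultimately show ?thesis unfolding n_def lb_def rb_def by simp
qed



lemma pos_strict: "sorted_wrt (<) (sorted_list_of_set (A::real set))"
  using sorted_list_of_set.strict_sorted_key_list_of_set[of A] by simp

lemma len_sl: "length (sorted_list_of_set (positions m x)) = npos m x"
  by (simp add: npos_def)

lemma set_sl: "set (sorted_list_of_set (positions m x)) = positions m x"
  by (simp add: positions_def)

lemma pos_less:
  assumes "1 \<le> k" "k < k'" "k' \<le> npos m x"
  shows "pos m x k < pos m x k'"
proof -
  have "sorted_list_of_set (positions m x) ! (k - 1) < sorted_list_of_set (positions m x) ! (k' - 1)"
    by (rule sorted_wrt_nth_less[OF pos_strict]) (use assms in \<open>auto simp: len_sl npos_def\<close>)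
  then show ?thesis by (simp add: pos_def)
qed

lemma pos_le:
  assumes "1 \<le> k" "k \<le> k'" "k' \<le> npos m x"
  shows "pos m x k \<le> pos m x k'"
  using pos_less[of k k' m x] assms by (cases "k = k'") auto

lemma pos_less_iff:
  assumes "1 \<le> k" "k \<le> npos m x" "1 \<le> k'" "k' \<le> npos m x"
  shows "pos m x k < pos m x k' \<longleftrightarrow> k < k'"
  using pos_less[of k k' m x] pos_less[of k' k m x] assms
  by (metis less_irrefl linorder_neqE_nat order.asym)

lemma pos_eq_iff:
  assumes "1 \<le> k" "k \<le> npos m x" "1 \<le> k'" "k' \<le> npos m x"
  shows "pos m x k = pos m x k' \<longleftrightarrow> k = k'"
  using pos_less[of k k' m x] pos_less[of k' k m x] assms
  by (metis less_irrefl linorder_neqE_nat)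

lemma pos_in:
  assumes "1 \<le> k" "k \<le> npos m x"
  shows "pos m x k \<in> positions m x"
proof -
  have "sorted_list_of_set (positions m x) ! (k - 1) \<in> set (sorted_list_of_set (positions m x))"
    using assms by (intro nth_mem) (use assms in \<open>simp add: len_sl npos_def\<close>)
  then show ?thesis by (simp add: pos_def set_sl)
qed

lemma in_pos:
  assumes "p \<in> positions m x"
  obtains k where "1 \<le> k" "k \<le> npos m x" "p = pos m x k"
proof -
  have "p \<in> set (sorted_list_of_set (positions m x))" using assms by (simp add: set_sl)
  then obtain j where j: "j < npos m x" "sorted_list_of_set (positions m x) ! j = p"
    by (auto simp: in_set_conv_nth len_sl npos_def)
  show ?thesis using j by (intro that[of "Suc j"]) (auto simp: pos_def)
qed

lemma positions_x: "i < m \<Longrightarrow> x i \<in> positions m x"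
  by (simp add: positions_def)

lemma fin_pos: "finite (positions m x)" by (simp add: positions_def)

lemma Min_pos:
  assumes "npos m x \<ge> 1"
  shows "Min (positions m x) = pos m x 1"
proof (rule Min_eqI[OF fin_pos])
  show "pos m x 1 \<in> positions m x" using assms by (intro pos_in) auto
  fix z assume "z \<in> positions m x"
  then obtain k where "1 \<le> k" "k \<le> npos m x" "z = pos m x k" by (rule in_pos)
  then show "pos m x 1 \<le> z" using pos_le[of 1 k m x] by auto
qed

lemma Max_pos:
  assumes "npos m x \<ge> 1"
  shows "Max (positions m x) = pos m x (npos m x)"
proof (rule Max_eqI[OF fin_pos])
  show "pos m x (npos m x) \<in> positions m x" using assms by (intro pos_in) auto
  fix z assume "z \<in> positions m x"
  then obtain k where "1 \<le> k" "k \<le> npos m x" "z = pos m x k" by (rule in_pos)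
  then show "z \<le> pos m x (npos m x)" using pos_le[of k "npos m x" m x] by auto
qed

lemma lbv_eqI:
  assumes "finite A" "a \<in> A" "a < p" "\<And>z. z \<in> A \<Longrightarrow> z < p \<Longrightarrow> z \<le> a"
  shows "lbv A p = (a + p) / 2"
proof -
  have "Max {z\<in>A. z < p} = a" using assms by (intro Max_eqI) auto
  then show ?thesis using assms by (auto simp: lbv_def)
qed

lemma lbv_none: "(\<And>z. z \<in> A \<Longrightarrow> \<not> z < p) \<Longrightarrow> lbv A p = 0"
  by (auto simp: lbv_def)

lemma rbv_eqI:
  assumes "finite A" "b \<in> A" "p < b" "\<And>z. z \<in> A \<Longrightarrow> p < z \<Longrightarrow> b \<le> z"
  shows "rbv A p = (p + b) / 2"
proof -
  have "Min {z\<in>A. p < z} = b" using assms by (intro Min_eqI) auto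
  then show ?thesis using assms by (auto simp: rbv_def)
qed

lemma rbv_none: "(\<And>z. z \<in> A \<Longrightarrow> \<not> p < z) \<Longrightarrow> rbv A p = 1"
  by (auto simp: rbv_def)

lemma lbv_pos:
  assumes "1 \<le> k" "k \<le> npos m x"
  shows "lbv (positions m x) (pos m x k) = lbd m x k"
proof (cases "k = 1")
  case True
  show ?thesis
  proof -
    have "lbv (positions m x) (pos m x k) = 0"
    proof (rule lbv_none)
      fix z assume "z \<in> positions m x"
      then obtain j where "1 \<le> j" "j \<le> npos m x" "z = pos m x j" by (rule in_pos)
      then show "\<not> z < pos m x k" using True pos_le[of 1 j m x] by auto
    qed
    then show ?thesis using True by (simp add: lbd_def)
  qed
next
  case False
  have "lbv (positions m x) (pos m x k) = (pos m x (k - 1) + pos m x k) / 2"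
  proof (rule lbv_eqI[OF fin_pos])
    show "pos m x (k - 1) \<in> positions m x" using assms False by (intro pos_in) auto
    show "pos m x (k - 1) < pos m x k" using assms False by (intro pos_less) auto
    fix z assume "z \<in> positions m x" "z < pos m x k"
    moreover from this(1) obtain j where "1 \<le> j" "j \<le> npos m x" "z = pos m x j" by (rule in_pos)
    ultimately show "z \<le> pos m x (k - 1)" using pos_less_iff[of j m x k] pos_le[of j "k - 1" m x] assms
      by auto
  qed
  then show ?thesis using False by (simp add: lbd_def)
qed

lemma rbv_pos:
  assumes "1 \<le> k" "k \<le> npos m x"
  shows "rbv (positions m x) (pos m x k) = rbd m x k"
proof (cases "k = npos m x")
  case True
  show ?thesis
  proof -
    have "rbv (positions m x) (pos m x k) = 1"
    proof (rule rbv_none)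
      fix z assume "z \<in> positions m x"
      then obtain j where "1 \<le> j" "j \<le> npos m x" "z = pos m x j" by (rule in_pos)
      then show "\<not> pos m x k < z" using True pos_le[of j "npos m x" m x] by auto
    qed
    then show ?thesis using True by (simp add: rbd_def)
  qed
next
  case False
  have "rbv (positions m x) (pos m x k) = (pos m x k + pos m x (k + 1)) / 2"
  proof (rule rbv_eqI[OF fin_pos])
    show "pos m x (k + 1) \<in> positions m x" using assms False by (intro pos_in) auto
    show "pos m x k < pos m x (k + 1)" using assms False by (intro pos_less) auto
    fix z assume "z \<in> positions m x" "pos m x k < z"
    moreover from this(1) obtain j where "1 \<le> j" "j \<le> npos m x" "z = pos m x j" by (rule in_pos)
    ultimately show "pos m x (k + 1) \<le> z" using pos_less_iff[of k m x j] pos_le[of "k + 1" j m x] assms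
      by auto
  qed
  then show ?thesis using False by (simp add: rbd_def)
qed

lemma consec_pos:
  assumes "u \<in> positions m x" "w \<in> positions m x" "u < w"
    and "\<And>z. z \<in> positions m x \<Longrightarrow> \<not> (u < z \<and> z < w)"
  obtains k where "1 \<le> k" "k < npos m x" "u = pos m x k" "w = pos m x (k + 1)"
proof -
  obtain k where k: "1 \<le> k" "k \<le> npos m x" "u = pos m x k" using assms(1) by (rule in_pos)
  obtain j where j: "1 \<le> j" "j \<le> npos m x" "w = pos m x j" using assms(2) by (rule in_pos)
  have kj: "k < j" using pos_less_iff[of k m x j] k j assms(3) by auto
  have "j = k + 1"
  proof (rule ccontr)
    assume "j \<noteq> k + 1"
    then have "k + 1 < j" using kj by auto
    then have "u < pos m x (k+1)" "pos m x (k+1) < w" using k j by (auto intro: pos_less)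
    moreover have "pos m x (k+1) \<in> positions m x" using k j \<open>k+1<j\<close> by (intro pos_in) auto
    ultimately show False using assms(4) by blast
  qed
  then show ?thesis using k j kj by (intro that[of k]) auto
qed



lemma prof_upd: "is_profile m x \<Longrightarrow> t \<in> {0..1} \<Longrightarrow> is_profile m (x(i := t))"
  by (auto simp: is_profile_def)

lemma img_upd: "i < m \<Longrightarrow> (x(i := t)) ` {..<m} = insert t (x ` ({..<m} - {i}))"
  by (auto simp: image_iff)

lemma mult_upd_single:
  assumes "i < m" "t \<notin> x ` ({..<m} - {i})"
  shows "mltp m (x(i := t)) t = 1"
proof -
  have "{j. j < m \<and> (x(i := t)) j = t} = {i}" using assms by (auto simp: image_iff)
  then show ?thesis by (simp add: mltp_def)
qed

lemma mult_upd_two: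
  assumes "i < m" "t \<in> x ` ({..<m} - {i})"
  shows "mltp m (x(i := t)) t \<ge> 2"
proof -
  obtain j where j: "j < m" "j \<noteq> i" "x j = t" using assms by auto
  have "{i, j} \<subseteq> {j. j < m \<and> (x(i := t)) j = t}" using assms j by auto
  then have "card {i, j} \<le> card {j. j < m \<and> (x(i := t)) j = t}" by (intro card_mono) auto
  then show ?thesis using j by (simp add: mltp_def)
qed

lemma devA:
  assumes prof: "is_profile m x" and i: "i < m" and t: "t \<in> {0..1}"
    and a: "a \<in> x ` ({..<m} - {i})" and b: "b \<in> x ` ({..<m} - {i})"
    and at: "a < t" and tb: "t < b"
    and gap: "\<And>z. z \<in> x ` ({..<m} - {i}) \<Longrightarrow> \<not> (a < z \<and> z < b)"
  shows "payoff c m (x(i := t)) i = (b - a) / 2"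
proof -
  let ?O = "x ` ({..<m} - {i})"
  let ?y = "x(i := t)"
  have fin: "finite (insert t ?O)" by simp
  have A: "?y ` {..<m} = insert t ?O" by (rule img_upd[OF i])
  have tO: "t \<notin> ?O" using gap at tb by blast
  have mn: "Min (insert t ?O) \<le> a" "b \<le> Max (insert t ?O)" using a b fin by auto
  have lohi: "Min (?y ` {..<m}) < Max (?y ` {..<m})" using mn at tb A by simp
  have pf: "payoff c m ?y i = (rbv (insert t ?O) t - lbv (insert t ?O) t) / real (mltp m ?y t)
           - c * Lam (insert t ?O) t / real (mltp m ?y t)"
    using payoff_formula[OF prof_upd[OF prof t] i lohi] A i by simp
  have m1: "mltp m ?y t = 1" by (rule mult_upd_single[OF i tO])
  have L: "Lam (insert t ?O) t = 0" using mn at tb by (auto simp: Lam_def)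
  have lb: "lbv (insert t ?O) t = (a + t) / 2"
  proof (rule lbv_eqI[OF fin])
    fix z assume "z \<in> insert t ?O" "z < t"
    then show "z \<le> a" using gap[of z] tb by auto
  qed (use a at in auto)
  have rb: "rbv (insert t ?O) t = (t + b) / 2"
  proof (rule rbv_eqI[OF fin])
    fix z assume "z \<in> insert t ?O" "t < z"
    then show "b \<le> z" using gap[of z] at by auto
  qed (use b tb in auto)
  show ?thesis using pf m1 L lb rb by (simp add: field_simps)
qed

lemma devB:
  assumes prof: "is_profile m x" and i: "i < m" and t: "t \<in> {0..1}"
    and a: "a \<in> x ` ({..<m} - {i})" and b: "b \<in> x ` ({..<m} - {i})"
    and lt: "\<And>z. z \<in> x ` ({..<m} - {i}) \<Longrightarrow> t < z"
    and ab: "\<And>z. z \<in> x ` ({..<m} - {i}) \<Longrightarrow> a \<le> z \<and> z \<le> b"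
  shows "payoff c m (x(i := t)) i = (t + a) / 2 - c * (1 - (t + b) / 2)"
proof -
  let ?O = "x ` ({..<m} - {i})"
  let ?y = "x(i := t)"
  have fin: "finite (insert t ?O)" by simp
  have A: "?y ` {..<m} = insert t ?O" by (rule img_upd[OF i])
  have tO: "t \<notin> ?O" using lt by blast
  have mn: "Min (insert t ?O) = t" using lt fin by (intro Min_eqI) (auto intro: less_imp_le)
  have mx: "Max (insert t ?O) = b" using lt fin ab b a by (intro Max_eqI) (auto intro: less_imp_le)
  have tb: "t < b" using lt b by auto
  have lohi: "Min (?y ` {..<m}) < Max (?y ` {..<m})" using mn mx tb A by simp
  have pf: "payoff c m ?y i = (rbv (insert t ?O) t - lbv (insert t ?O) t) / real (mltp m ?y t)
           - c * Lam (insert t ?O) t / real (mltp m ?y t)"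
    using payoff_formula[OF prof_upd[OF prof t] i lohi] A i by simp
  have m1: "mltp m ?y t = 1" by (rule mult_upd_single[OF i tO])
  have L: "Lam (insert t ?O) t = 1 - (t + b) / 2" using mn mx by (auto simp: Lam_def)
  have lb: "lbv (insert t ?O) t = 0"
    by (rule lbv_none) (use lt in \<open>auto simp: not_less intro: less_imp_le\<close>)
  have rb: "rbv (insert t ?O) t = (t + a) / 2"
    by (rule rbv_eqI[OF fin]) (use a lt ab in \<open>auto simp: not_less\<close>)
  show ?thesis using pf m1 L lb rb by (simp add: field_simps)
qed

lemma devC:
  assumes prof: "is_profile m x" and i: "i < m" and t: "t \<in> {0..1}"
    and a: "a \<in> x ` ({..<m} - {i})" and b: "b \<in> x ` ({..<m} - {i})"
    and gt: "\<And>z. z \<in> x ` ({..<m} - {i}) \<Longrightarrow> z < t"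
    and ab: "\<And>z. z \<in> x ` ({..<m} - {i}) \<Longrightarrow> a \<le> z \<and> z \<le> b"
  shows "payoff c m (x(i := t)) i = 1 - (b + t) / 2 - c * ((a + t) / 2)"
proof -
  let ?O = "x ` ({..<m} - {i})"
  let ?y = "x(i := t)"
  have fin: "finite (insert t ?O)" by simp
  have A: "?y ` {..<m} = insert t ?O" by (rule img_upd[OF i])
  have tO: "t \<notin> ?O" using gt by blast
  have mx: "Max (insert t ?O) = t" using gt fin by (intro Max_eqI) (auto intro: less_imp_le)
  have mn: "Min (insert t ?O) = a" using gt fin ab b a by (intro Min_eqI) (auto intro: less_imp_le)
  have tb: "a < t" using gt a by auto
  have lohi: "Min (?y ` {..<m}) < Max (?y ` {..<m})" using mn mx tb A by simp
  have pf: "payoff c m ?y i = (rbv (insert t ?O) t - lbv (insert t ?O) t) / real (mltp m ?y t)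
           - c * Lam (insert t ?O) t / real (mltp m ?y t)"
    using payoff_formula[OF prof_upd[OF prof t] i lohi] A i by simp
  have m1: "mltp m ?y t = 1" by (rule mult_upd_single[OF i tO])
  have L: "Lam (insert t ?O) t = (a + t) / 2" using mn mx tb by (auto simp: Lam_def)
  have rb: "rbv (insert t ?O) t = 1"
    by (rule rbv_none) (use gt in \<open>auto simp: not_less intro: less_imp_le\<close>)
  have lb: "lbv (insert t ?O) t = (b + t) / 2"
    by (rule lbv_eqI[OF fin]) (use b gt ab in \<open>auto simp: not_less\<close>)
  show ?thesis using pf m1 L lb rb by (simp add: field_simps)
qed

lemma devEq:
  assumes prof: "is_profile m x" and i: "i < m" and t: "t \<in> {0..1}"
    and tO: "t \<in> x ` ({..<m} - {i})"
    and lohi: "Min (x ` ({..<m} - {i})) < Max (x ` ({..<m} - {i}))"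
  shows "payoff c m (x(i := t)) i =
     (rbv (x ` ({..<m} - {i})) t - lbv (x ` ({..<m} - {i})) t) / real (mltp m (x(i := t)) t)
           - c * Lam (x ` ({..<m} - {i})) t / real (mltp m (x(i := t)) t)"
    and "mltp m (x(i := t)) t \<ge> 2"
proof -
  let ?O = "x ` ({..<m} - {i})"
  let ?y = "x(i := t)"
  have A: "?y ` {..<m} = ?O" using img_upd[OF i, of x t] tO by auto
  show "payoff c m (x(i := t)) i =
     (rbv ?O t - lbv ?O t) / real (mltp m (x(i := t)) t) - c * Lam ?O t / real (mltp m (x(i := t)) t)"
    using payoff_formula[OF prof_upd[OF prof t] i] A lohi i by simp
  show "mltp m (x(i := t)) t \<ge> 2" by (rule mult_upd_two[OF i tO])
qed

lemma payoff_pos: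
  assumes prof: "is_profile m x" and q: "npos m x \<ge> 2" and i: "i < m"
    and k: "1 \<le> k" "k \<le> npos m x" and xi: "x i = pos m x k"
  shows "payoff c m x i = (rbd m x k - lbd m x k) / real (nmult m x k)
     - c * (if k = 1 then 1 - (pos m x 1 + pos m x (npos m x)) / 2
            else if k = npos m x then (pos m x 1 + pos m x (npos m x)) / 2 else 0) / real (nmult m x k)"
proof -
  have P: "x ` {..<m} = positions m x" by (simp add: positions_def)
  have mn: "Min (positions m x) = pos m x 1" and mx: "Max (positions m x) = pos m x (npos m x)"
    using q Min_pos[of m x] Max_pos[of m x] by auto
  have lt: "pos m x 1 < pos m x (npos m x)" using q by (intro pos_less) auto
  have "payoff c m x i = (rbv (positions m x) (pos m x k) - lbv (positions m x) (pos m x k)) / real (mltp m x (pos m x k))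
           - c * Lam (positions m x) (pos m x k) / real (mltp m x (pos m x k))"
    using payoff_formula[OF prof i] P xi mn mx lt by simp
  moreover have "mltp m x (pos m x k) = nmult m x k" by (simp add: mltp_def nmult_def)
  moreover have "Lam (positions m x) (pos m x k) = (if k = 1 then 1 - (pos m x 1 + pos m x (npos m x)) / 2
            else if k = npos m x then (pos m x 1 + pos m x (npos m x)) / 2 else 0)"
    using pos_eq_iff[of k m x 1] pos_eq_iff[of k m x "npos m x"] k q mn mx by (auto simp: Lam_def)
  ultimately show ?thesis using rbv_pos[OF k] lbv_pos[OF k] by simp
qed



lemma pos_01:
  assumes "is_profile m x" "1 \<le> k" "k \<le> npos m x"
  shows "0 \<le> pos m x k" "pos m x k \<le> 1"
  using pos_in[OF assms(2,3)] assms(1) by (auto simp: positions_def is_profile_def)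

lemma obtain_cand:
  assumes "1 \<le> k" "k \<le> npos m x"
  obtains i where "i < m" "x i = pos m x k"
  using pos_in[OF assms] by (auto simp: positions_def)

lemma nmult_ge1:
  assumes "1 \<le> k" "k \<le> npos m x"
  shows "nmult m x k \<ge> 1"
proof -
  obtain i where "i < m" "x i = pos m x k" using assms by (rule obtain_cand)
  then have "{i} \<subseteq> {i. i < m \<and> x i = pos m x k}" by auto
  then have "card {i} \<le> nmult m x k" unfolding nmult_def by (intro card_mono) auto
  then show ?thesis by simp
qed

lemma O_eq2:
  assumes "i < m" "x i = pos m x k" "nmult m x k \<ge> 2"
  shows "x ` ({..<m} - {i}) = positions m x"
proof -
  have "\<exists>j. j < m \<and> x j = pos m x k \<and> j \<noteq> i"
  proof (rule ccontr)
    assume "\<not> ?thesis"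
    then have "{i. i < m \<and> x i = pos m x k} \<subseteq> {i}" by auto
    then have "card {i. i < m \<and> x i = pos m x k} \<le> card {i}" by (intro card_mono) auto
    then have "nmult m x k \<le> 1" unfolding nmult_def by simp
    then show False using assms by auto
  qed
  then obtain j where j: "j < m" "x j = x i" "j \<noteq> i" using assms by auto
  show ?thesis
  proof
    show "x ` ({..<m} - {i}) \<subseteq> positions m x" by (auto simp: positions_def)
    show "positions m x \<subseteq> x ` ({..<m} - {i})"
    proof
      fix z assume "z \<in> positions m x"
      then obtain l where l: "l < m" "z = x l" by (auto simp: positions_def)
      show "z \<in> x ` ({..<m} - {i})"
      proof (cases "l = i")
        case True then show ?thesis using j l by (auto intro!: image_eqI[where x=j])
      next
        case False then show ?thesis using l by auto
      qed
    qed
  qed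
qed

lemma O_eq1:
  assumes "i < m" "x i = pos m x k" "nmult m x k = 1"
  shows "x ` ({..<m} - {i}) = positions m x - {pos m x k}"
proof -
  have fin: "finite {i. i < m \<and> x i = pos m x k}" by auto
  have iin: "i \<in> {i. i < m \<and> x i = pos m x k}" using assms by auto
  have "{i. i < m \<and> x i = pos m x k} = {i}"
    using assms(3) iin fin unfolding nmult_def by (metis card_1_singletonE singletonD)
  then have uniq: "\<And>j. j < m \<Longrightarrow> x j = pos m x k \<Longrightarrow> j = i" by auto
  show ?thesis
  proof
    show "x ` ({..<m} - {i}) \<subseteq> positions m x - {pos m x k}" using uniq by (auto simp: positions_def)
    show "positions m x - {pos m x k} \<subseteq> x ` ({..<m} - {i})"
      using assms(2) by (auto simp: positions_def)
  qed
qed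

lemma O_sub: "x ` ({..<m} - {i}) \<subseteq> positions m x"
  by (auto simp: positions_def)

lemma no_between:
  assumes "z \<in> positions m x" "1 \<le> j" "j < npos m x"
  shows "\<not> (pos m x j < z \<and> z < pos m x (j + 1))"
proof
  assume H: "pos m x j < z \<and> z < pos m x (j + 1)"
  obtain l where l: "1 \<le> l" "l \<le> npos m x" "z = pos m x l" using assms(1) by (rule in_pos)
  have "j < l" "l < j + 1" using H l assms pos_less_iff[of j m x l] pos_less_iff[of l m x "j+1"] by auto
  then show False by auto
qed

lemma pos_bounds:
  assumes "z \<in> positions m x"
  shows "pos m x 1 \<le> z" "z \<le> pos m x (npos m x)"
proof -
  obtain l where l: "1 \<le> l" "l \<le> npos m x" "z = pos m x l" using assms by (rule in_pos)
  then show "pos m x 1 \<le> z" "z \<le> pos m x (npos m x)" using pos_le by auto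
qed

lemma lenL_1: "lenL m x 1 = pos m x 1" by (simp add: lenL_def lbd_def)
lemma lenL_k: "k \<noteq> 1 \<Longrightarrow> lenL m x k = (pos m x k - pos m x (k - 1)) / 2"
  by (simp add: lenL_def lbd_def field_simps)
lemma lenR_q: "lenR m x (npos m x) = 1 - pos m x (npos m x)" by (simp add: lenR_def rbd_def)
lemma lenR_k: "k \<noteq> npos m x \<Longrightarrow> lenR m x k = (pos m x (k + 1) - pos m x k) / 2"
  by (simp add: lenR_def rbd_def field_simps)
lemma lenI_LR: "lenI m x k = lenL m x k + lenR m x k"
  by (simp add: lenI_def lenL_def lenR_def)
lemma lenL_R: "1 \<le> k \<Longrightarrow> k < npos m x \<Longrightarrow> lenL m x (k + 1) = lenR m x k"
  by (simp add: lenL_k lenR_k)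

lemma devA_gap:
  assumes prof: "is_profile m x" and i: "i < m"
    and j: "1 \<le> j" "j < npos m x"
    and a: "pos m x j \<in> x ` ({..<m} - {i})" and b: "pos m x (j + 1) \<in> x ` ({..<m} - {i})"
  shows "payoff c m (x(i := (pos m x j + pos m x (j + 1)) / 2)) i = lenR m x j"
proof -
  have lt: "pos m x j < pos m x (j + 1)" using j by (intro pos_less) auto
  have "0 \<le> pos m x j" "pos m x (j + 1) \<le> 1" using pos_01[OF prof] j by auto
  then have t: "(pos m x j + pos m x (j + 1)) / 2 \<in> {0..1}" using lt by auto
  have "payoff c m (x(i := (pos m x j + pos m x (j + 1)) / 2)) i = (pos m x (j + 1) - pos m x j) / 2"
  proof (rule devA[OF prof i t a b])
    fix z assume "z \<in> x ` ({..<m} - {i})"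
    then have "z \<in> positions m x" using O_sub by blast
    then show "\<not> (pos m x j < z \<and> z < pos m x (j + 1))" by (rule no_between[OF _ j])
  qed (use lt in auto)
  then show ?thesis using j by (simp add: lenR_k)
qed



lemma NE_dev:
  assumes "is_NE c m x" "i < m" "t \<in> {0..1}"
  shows "payoff c m (x(i := t)) i \<le> payoff c m x i"
  using assms by (auto simp: is_NE_def)

lemma lenR_pos: "1 \<le> j \<Longrightarrow> j < npos m x \<Longrightarrow> lenR m x j > 0"
  using pos_less[of j "j+1" m x] by (simp add: lenR_k)

lemma mul_div_help: "(N::real) \<noteq> 0 \<Longrightarrow> V = A / N - B / N \<Longrightarrow> N * V = A - B"
  by (simp add: field_simps)

lemma necessity_facts:
  assumes prof: "is_profile m x" and q2: "npos m x \<ge> 2" and c0: "0 \<le> c" and c1: "c < 1"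
    and NE: "is_NE c m x"
  shows "nmult m x 1 = 2" "nmult m x (npos m x) = 2"
    "\<And>k. 1 \<le> k \<Longrightarrow> k \<le> npos m x \<Longrightarrow> nmult m x k \<le> 2"
    "\<And>j. 1 \<le> j \<Longrightarrow> j < npos m x \<Longrightarrow> lenR m x j \<le> lenR m x 1"
    "lenL m x (npos m x) = lenR m x 1"
    "pos m x 1 + pos m x (npos m x) = 1"
    "lenL m x 1 = lenR m x 1 + c / 2" "lenR m x (npos m x) = lenR m x 1 + c / 2"
    "\<And>k. 1 < k \<Longrightarrow> k < npos m x \<Longrightarrow> nmult m x k = 2 \<Longrightarrow>
        lenL m x k = lenR m x 1 \<and> lenR m x k = lenR m x 1"
    "\<And>k j. 1 \<le> k \<Longrightarrow> k \<le> npos m x \<Longrightarrow> nmult m x k = 1 \<Longrightarrow> 1 \<le> j \<Longrightarrow> j < npos m x \<Longrightarrow>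
        lenR m x j \<le> lenI m x k"
proof -
  define q where "q = npos m x"
  have q2': "q \<ge> 2" using q2 q_def by simp
  have qm: "1 \<le> q - 1" "q - 1 < q" using q2' by auto
  define V where "V k = (rbd m x k - lbd m x k) / real (nmult m x k)
     - c * (if k = 1 then 1 - (pos m x 1 + pos m x q) / 2
            else if k = q then (pos m x 1 + pos m x q) / 2 else 0) / real (nmult m x k)" for k
  have Vpay: "payoff c m x i = V k" if "i < m" "1 \<le> k" "k \<le> q" "x i = pos m x k" for i k
    using payoff_pos[OF prof q2 that(1)] that unfolding V_def q_def by simp
  have p01: "0 \<le> pos m x k" "pos m x k \<le> 1" if "1 \<le> k" "k \<le> q" for k
    using pos_01[OF prof] that q_def by auto
  have plt: "pos m x k < pos m x k'" if "1 \<le> k" "k < k'" "k' \<le> q" for k k'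
    using pos_less that q_def by auto
  have ple: "pos m x k \<le> pos m x k'" if "1 \<le> k" "k \<le> k'" "k' \<le> q" for k k'
    using pos_le that q_def by auto
  have p1q: "pos m x 1 < pos m x q" using plt q2' by auto
  have nge1: "nmult m x k \<ge> 1" if "1 \<le> k" "k \<le> q" for k using nmult_ge1 that q_def by auto

  have gapdev: "lenR m x j \<le> V k" if k: "1 \<le> k" "k \<le> q" and nk: "nmult m x k \<ge> 2"
     and j: "1 \<le> j" "j < q" for k j
  proof -
    obtain i where i: "i < m" "x i = pos m x k" using obtain_cand[of k m x] k unfolding q_def by blast
    have O: "x ` ({..<m} - {i}) = positions m x" by (rule O_eq2[OF i nk])
    have "payoff c m (x(i := (pos m x j + pos m x (j + 1)) / 2)) i = lenR m x j"
      by (rule devA_gap[OF prof i(1)]) (use j O pos_in q_def in auto)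
    moreover have "payoff c m (x(i := (pos m x j + pos m x (j + 1)) / 2)) i \<le> payoff c m x i"
      using p01[of j] p01[of "j+1"] j by (intro NE_dev[OF NE i(1)]) auto
    ultimately show ?thesis using Vpay[OF i(1) k i(2)] by simp
  qed

  have n1: "nmult m x 1 \<ge> 2"
  proof (rule ccontr)
    assume "\<not> ?thesis"
    then have n1: "nmult m x 1 = 1" using nge1[of 1] q2' by auto
    obtain i where i: "i < m" "x i = pos m x 1" using obtain_cand[of _ m x] q2' unfolding q_def by (metis le_refl one_le_numeral order_trans)
    have O: "x ` ({..<m} - {i}) = positions m x - {pos m x 1}" by (rule O_eq1[OF i n1])
    define t where "t = (pos m x 1 + pos m x 2) / 2"
    have p12: "pos m x 1 < pos m x 2" using plt q2' by auto
    have t01: "t \<in> {0..1}" using p01[of 1] p01[of 2] q2' p12 unfolding t_def by auto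
    have inO: "z \<in> x ` ({..<m} - {i}) \<longleftrightarrow> (\<exists>l. 2 \<le> l \<and> l \<le> q \<and> z = pos m x l)" for z
    proof
      assume "z \<in> x ` ({..<m} - {i})"
      then have z: "z \<in> positions m x" "z \<noteq> pos m x 1" using O by auto
      obtain l where "1 \<le> l" "l \<le> npos m x" "z = pos m x l" using z(1) by (rule in_pos)
      then show "\<exists>l. 2 \<le> l \<and> l \<le> q \<and> z = pos m x l" using z(2) q_def
        by (intro exI[of _ l]) (cases "l = 1", auto)
    next
      assume "\<exists>l. 2 \<le> l \<and> l \<le> q \<and> z = pos m x l"
      then obtain l where l: "2 \<le> l" "l \<le> q" "z = pos m x l" by auto
      then have "z \<in> positions m x" using pos_in q_def by auto
      moreover have "z \<noteq> pos m x 1" using l plt[of 1 l] by auto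
      ultimately show "z \<in> x ` ({..<m} - {i})" using O by auto
    qed
    have dev: "payoff c m (x(i := t)) i = (t + pos m x 2) / 2 - c * (1 - (t + pos m x q) / 2)"
    proof (rule devB[OF prof i(1) t01])
      show "pos m x 2 \<in> x ` ({..<m} - {i})" "pos m x q \<in> x ` ({..<m} - {i})"
        using inO q2' by auto
      fix z assume "z \<in> x ` ({..<m} - {i})"
      then obtain l where l: "2 \<le> l" "l \<le> q" "z = pos m x l" using inO by auto
      have "pos m x 2 \<le> z" using l plt[of 2 l] by (cases "l = 2") auto
      moreover have "z \<le> pos m x q" using l plt[of l q] by (cases "l = q") auto
      ultimately show "t < z" "pos m x 2 \<le> z \<and> z \<le> pos m x q" using p12 unfolding t_def by auto
    qed
    have V1: "V 1 = (pos m x 1 + pos m x 2) / 2 - c * (1 - (pos m x 1 + pos m x q) / 2)"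
      using n1 q2' unfolding V_def q_def by (simp add: rbd_def lbd_def numeral_2_eq_2)
    have "payoff c m (x(i := t)) i \<le> V 1"
      using NE_dev[OF NE i(1) t01] Vpay[OF i(1) _ _ i(2)] q2' by simp
    moreover have "c * pos m x 2 - c * pos m x 1 \<ge> 0" using c0 p12
      by (metis diff_ge_0_iff_ge less_eq_real_def mult_left_mono)
    ultimately show False using dev V1 p12 c0 unfolding t_def by (simp add: field_simps)
  qed
  have nq: "nmult m x q \<ge> 2"
  proof (rule ccontr)
    assume "\<not> ?thesis"
    then have nq: "nmult m x q = 1" using nge1[of q] q2' by auto
    obtain i where i: "i < m" "x i = pos m x q" using obtain_cand[of _ m x] q2' unfolding q_def by (metis le_refl one_le_numeral order_trans)
    have O: "x ` ({..<m} - {i}) = positions m x - {pos m x q}" by (rule O_eq1[OF i nq])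
    define t where "t = (pos m x (q - 1) + pos m x q) / 2"
    have p12: "pos m x (q - 1) < pos m x q" using plt q2' by auto
    have t01: "t \<in> {0..1}" using qm p01[of "q - 1"] p01[of q] q2' p12 unfolding t_def by auto
    have inO: "z \<in> x ` ({..<m} - {i}) \<longleftrightarrow> (\<exists>l. 1 \<le> l \<and> l \<le> q - 1 \<and> z = pos m x l)" for z
    proof
      assume "z \<in> x ` ({..<m} - {i})"
      then have z: "z \<in> positions m x" "z \<noteq> pos m x q" using O by auto
      obtain l where "1 \<le> l" "l \<le> npos m x" "z = pos m x l" using z(1) by (rule in_pos)
      then show "\<exists>l. 1 \<le> l \<and> l \<le> q - 1 \<and> z = pos m x l" using z(2) q_def
        by (intro exI[of _ l]) (cases "l = q", auto)
    next
      assume "\<exists>l. 1 \<le> l \<and> l \<le> q - 1 \<and> z = pos m x l"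
      then obtain l where l: "1 \<le> l" "l \<le> q - 1" "z = pos m x l" by auto
      then have "z \<in> positions m x" using pos_in q_def by auto
      moreover have "l < q" using l q2' by auto
      then have "z \<noteq> pos m x q" using l plt[of l q] by auto
      ultimately show "z \<in> x ` ({..<m} - {i})" using O by auto
    qed
    have dev: "payoff c m (x(i := t)) i = 1 - (pos m x (q - 1) + t) / 2 - c * ((pos m x 1 + t) / 2)"
    proof (rule devC[OF prof i(1) t01])
      show "pos m x 1 \<in> x ` ({..<m} - {i})" using inO q2' by auto
      show "pos m x (q - 1) \<in> x ` ({..<m} - {i})" using inO[of "pos m x (q - 1)"] q2' by force
      fix z assume "z \<in> x ` ({..<m} - {i})"
      then obtain l where l: "1 \<le> l" "l \<le> q - 1" "z = pos m x l" using inO by auto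
      have "pos m x 1 \<le> z" using l ple[of 1 l] by auto
      moreover have "z \<le> pos m x (q - 1)" using qm l ple[of l "q - 1"] q2' by auto
      ultimately show "z < t" "pos m x 1 \<le> z \<and> z \<le> pos m x (q - 1)" using p12 unfolding t_def by auto
    qed
    have Vq: "V q = (1 - (pos m x (q - 1) + pos m x q) / 2) - c * ((pos m x 1 + pos m x q) / 2)"
      using nq q2' unfolding V_def q_def by (simp add: rbd_def lbd_def)
    have "payoff c m (x(i := t)) i \<le> V q"
      using NE_dev[OF NE i(1) t01] Vpay[OF i(1) _ _ i(2)] q2' by simp
    moreover have "c * pos m x q - c * pos m x (q - 1) \<ge> 0" using c0 p12
      by (metis diff_ge_0_iff_ge less_eq_real_def mult_left_mono)
    ultimately show False using dev Vq p12 c0 unfolding t_def by (simp add: field_simps)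
  qed
  have Vk: "V k = (lenL m x k + lenR m x k) / real (nmult m x k)
     - c * (if k = 1 then 1 - (pos m x 1 + pos m x q) / 2
            else if k = q then (pos m x 1 + pos m x q) / 2 else 0) / real (nmult m x k)" for k
    unfolding V_def by (simp add: lenI_LR[symmetric] lenI_def)
  have L1: "lenL m x 1 = pos m x 1" by (rule lenL_1)
  have Rq: "lenR m x q = 1 - pos m x q" unfolding q_def by (rule lenR_q)
  have gap1: "lenR m x j \<le> V 1" if "1 \<le> j" "j < q" for j
    using gapdev[of 1 j] n1 q2' that by auto
  have gapq: "lenR m x j \<le> V q" if "1 \<le> j" "j < q" for j
    using gapdev[of q j] nq q2' that by auto
  have Rpos: "lenR m x j > 0" if "1 \<le> j" "j < q" for j using lenR_pos that q_def by auto
  have LR: "lenL m x (j + 1) = lenR m x j" if "1 \<le> j" "j < q" for j using lenL_R that q_def by auto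
  have Lam1: "0 \<le> 1 - (pos m x 1 + pos m x q) / 2" using p01[of 1] p01[of q] q2' by auto
  have Lamq: "0 \<le> (pos m x 1 + pos m x q) / 2" using p01[of 1] p01[of q] q2' by auto
  have NB: "pos m x 1 - c * (1 - (pos m x 1 + pos m x q) / 2) \<le> V 1"
  proof (cases "pos m x 1 = 0")
    case True
    have "0 \<le> c * (1 - (pos m x 1 + pos m x q) / 2)" using c0 Lam1 by simp
    moreover have "0 < V 1" using gap1[of 1] Rpos[of 1] q2' by auto
    ultimately show ?thesis using True by simp
  next
    case False
    then have pp: "pos m x 1 > 0" using p01[of 1] q2' by auto
    show ?thesis
    proof (rule ccontr)
      assume neg: "\<not> ?thesis"
      define e where "e = pos m x 1 - c * (1 - (pos m x 1 + pos m x q) / 2) - V 1"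
      have e: "e > 0" using neg unfolding e_def by simp
      define d where "d = min (pos m x 1) (e / (1 + c))"
      have d: "d > 0" "d \<le> pos m x 1" using pp e c0 unfolding d_def by auto
      have "d \<le> e / (1 + c)" unfolding d_def by simp
      then have de: "d + c * d \<le> e" using c0 by (simp add: field_simps)
      define t where "t = pos m x 1 - d"
      have t01: "t \<in> {0..1}" using d p01[of 1] q2' unfolding t_def by auto
      obtain i where i: "i < m" "x i = pos m x 1" using obtain_cand[of _ m x] q2' unfolding q_def
        by (metis le_refl one_le_numeral order_trans)
      have O: "x ` ({..<m} - {i}) = positions m x" by (rule O_eq2[OF i n1])
      have dev: "payoff c m (x(i := t)) i = (t + pos m x 1) / 2 - c * (1 - (t + pos m x q) / 2)"
      proof (rule devB[OF prof i(1) t01])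
        show "pos m x 1 \<in> x ` ({..<m} - {i})" "pos m x q \<in> x ` ({..<m} - {i})"
          using O pos_in q2' q_def by auto
        fix z assume "z \<in> x ` ({..<m} - {i})"
        then have "z \<in> positions m x" using O by simp
        then have "pos m x 1 \<le> z" "z \<le> pos m x q" using pos_bounds q_def by auto
        then show "t < z" "pos m x 1 \<le> z \<and> z \<le> pos m x q" using d unfolding t_def by auto
      qed
      have "payoff c m (x(i := t)) i \<le> V 1"
        using NE_dev[OF NE i(1) t01] Vpay[OF i(1) _ _ i(2)] q2' by simp
      moreover obtain X where X: "X = pos m x 1 - c * (1 - (pos m x 1 + pos m x q) / 2)" by simp
      moreover have "2 * payoff c m (x(i := t)) i = 2 * X - (d + c * d)"
        using dev unfolding t_def X by (simp add: field_simps)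
      moreover have "d + c * d \<le> X - V 1" "0 < X - V 1" using de e unfolding e_def X by auto
      ultimately show False by linarith
    qed
  qed
  have NC: "(1 - pos m x q) - c * ((pos m x 1 + pos m x q) / 2) \<le> V q"
  proof (cases "pos m x q = 1")
    case True
    have "0 \<le> c * ((pos m x 1 + pos m x q) / 2)" using c0 Lamq by simp
    moreover have "0 < V q" using qm gapq[of "q - 1"] Rpos[of "q - 1"] q2' by auto
    ultimately show ?thesis using True by simp
  next
    case False
    then have pp: "pos m x q < 1" using p01[of q] q2' by auto
    show ?thesis
    proof (rule ccontr)
      assume neg: "\<not> ?thesis"
      define e where "e = (1 - pos m x q) - c * ((pos m x 1 + pos m x q) / 2) - V q"
      have e: "e > 0" using neg unfolding e_def by simp
      define d where "d = min (1 - pos m x q) (e / (1 + c))"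
      have d: "d > 0" "d \<le> 1 - pos m x q" using pp e c0 unfolding d_def by auto
      have "d \<le> e / (1 + c)" unfolding d_def by simp
      then have de: "d + c * d \<le> e" using c0 by (simp add: field_simps)
      define t where "t = pos m x q + d"
      have t01: "t \<in> {0..1}" using d p01[of q] q2' unfolding t_def by auto
      obtain i where i: "i < m" "x i = pos m x q" using obtain_cand[of _ m x] q2' unfolding q_def
        by (metis le_refl one_le_numeral order_trans)
      have O: "x ` ({..<m} - {i}) = positions m x" by (rule O_eq2[OF i nq])
      have dev: "payoff c m (x(i := t)) i = 1 - (pos m x q + t) / 2 - c * ((pos m x 1 + t) / 2)"
      proof (rule devC[OF prof i(1) t01])
        show "pos m x 1 \<in> x ` ({..<m} - {i})" "pos m x q \<in> x ` ({..<m} - {i})"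
          using O pos_in q2' q_def by auto
        fix z assume "z \<in> x ` ({..<m} - {i})"
        then have "z \<in> positions m x" using O by simp
        then have "pos m x 1 \<le> z" "z \<le> pos m x q" using pos_bounds q_def by auto
        then show "z < t" "pos m x 1 \<le> z \<and> z \<le> pos m x q" using d unfolding t_def by auto
      qed
      have "payoff c m (x(i := t)) i \<le> V q"
        using NE_dev[OF NE i(1) t01] Vpay[OF i(1) _ _ i(2)] q2' by simp
      moreover obtain X where X: "X = (1 - pos m x q) - c * ((pos m x 1 + pos m x q) / 2)" by simp
      moreover have "2 * payoff c m (x(i := t)) i = 2 * X - (d + c * d)"
        using dev unfolding t_def X by (simp add: field_simps)
      moreover have "d + c * d \<le> X - V q" "0 < X - V q" using de e unfolding e_def X by auto
      ultimately show False by linarith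
    qed
  qed
  have V1pos: "V 1 > 0" using gap1[of 1] Rpos[of 1] q2' by auto
  have n1eq: "real (nmult m x 1) * V 1 = lenL m x 1 + lenR m x 1 - c * (1 - (pos m x 1 + pos m x q) / 2)"
  proof (rule mul_div_help)
    show "real (nmult m x 1) \<noteq> 0" using n1 by simp
    show "V 1 = (lenL m x 1 + lenR m x 1) / real (nmult m x 1) - c * (1 - (pos m x 1 + pos m x q) / 2) / real (nmult m x 1)"
      using Vk[of 1] by simp
  qed
  have n1_2: "nmult m x 1 = 2"
  proof (rule ccontr)
    assume "nmult m x 1 \<noteq> 2"
    then have "real (nmult m x 1) \<ge> 3" using n1 by simp
    then have "real (nmult m x 1) * V 1 \<ge> 3 * V 1" using V1pos by (intro mult_right_mono) auto
    then show False using n1eq gap1[of 1] NB L1 V1pos q2' by simp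
  qed
  have V1: "V 1 = lenR m x 1" "pos m x 1 - c * (1 - (pos m x 1 + pos m x q) / 2) = lenR m x 1"
    using n1eq n1_2 gap1[of 1] NB L1 q2' by auto
  have Vqpos: "V q > 0" using qm gapq[of "q - 1"] Rpos[of "q - 1"] q2' by auto
  have nqeq: "real (nmult m x q) * V q = lenL m x q + lenR m x q - c * ((pos m x 1 + pos m x q) / 2)"
  proof (rule mul_div_help)
    show "real (nmult m x q) \<noteq> 0" using nq by simp
    show "V q = (lenL m x q + lenR m x q) / real (nmult m x q) - c * ((pos m x 1 + pos m x q) / 2) / real (nmult m x q)"
      using Vk[of q] q2' by simp
  qed
  have Lq: "lenL m x q = lenR m x (q - 1)" using qm LR[of "q - 1"] q2' by simp
  have nq_2: "nmult m x q = 2"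
  proof (rule ccontr)
    assume "nmult m x q \<noteq> 2"
    then have "real (nmult m x q) \<ge> 3" using nq by simp
    then have "real (nmult m x q) * V q \<ge> 3 * V q" using Vqpos by (intro mult_right_mono) auto
    then show False using qm nqeq gapq[of "q - 1"] NC Rq Lq Vqpos q2' by simp
  qed
  have Vq: "V q = lenL m x q" "(1 - pos m x q) - c * ((pos m x 1 + pos m x q) / 2) = lenL m x q"
    using qm nqeq nq_2 gapq[of "q - 1"] NC Rq Lq q2' by auto
  have allgap: "lenR m x j \<le> lenR m x 1" if "1 \<le> j" "j < q" for j using gap1[OF that] V1 by simp
  have LqIp: "lenL m x q = lenR m x 1"
    using qm gapq[of 1] Vq(1) allgap[of "q - 1"] Lq q2' by auto
  have sum: "pos m x 1 + pos m x q = 1"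
  proof -
    have "(pos m x 1 + pos m x q - 1) * (1 + c) = 0"
      using V1(2) Vq(2) LqIp by (simp add: algebra_simps add_divide_distrib diff_divide_distrib)
    then show ?thesis using c0 by simp
  qed
  have interior: "nmult m x k = 2 \<and> lenL m x k = lenR m x 1 \<and> lenR m x k = lenR m x 1"
    if k: "1 < k" "k < q" and nk: "nmult m x k \<ge> 2" for k
  proof -
    have Vk': "V k = (lenL m x k + lenR m x k) / real (nmult m x k)" using Vk[of k] k by simp
    have a1: "lenL m x k \<le> V k" using gapdev[of k "k - 1"] LR[of "k - 1"] k nk by auto
    have a2: "lenR m x k \<le> V k" using gapdev[of k k] k nk by auto
    have a3: "lenR m x 1 \<le> V k" using gapdev[of k 1] k nk by auto
    have Vkpos: "V k > 0" using a2 Rpos[of k] k by auto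
    have eq: "real (nmult m x k) * V k = lenL m x k + lenR m x k" using Vk' nk by (simp add: field_simps)
    have n2: "nmult m x k = 2"
    proof (rule ccontr)
      assume "nmult m x k \<noteq> 2"
      then have "real (nmult m x k) \<ge> 3" using nk by simp
      then have "real (nmult m x k) * V k \<ge> 3 * V k" using Vkpos by (intro mult_right_mono) auto
      then show False using eq a1 a2 Vkpos by simp
    qed
    have "lenL m x k = V k" "lenR m x k = V k" using eq n2 a1 a2 by auto
    moreover have "lenL m x k \<le> lenR m x 1" using LR[of "k - 1"] allgap[of "k - 1"] k by simp
    ultimately show ?thesis using a3 n2 by auto
  qed
  show "nmult m x 1 = 2" "nmult m x (npos m x) = 2" using n1_2 nq_2 q_def by auto
  show "\<And>k. 1 \<le> k \<Longrightarrow> k \<le> npos m x \<Longrightarrow> nmult m x k \<le> 2"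
  proof -
    fix k assume k: "1 \<le> k" "k \<le> npos m x"
    show "nmult m x k \<le> 2"
    proof (cases "k = 1 \<or> k = q")
      case True then show ?thesis using n1_2 nq_2 by auto
    next
      case False
      then show ?thesis using interior[of k] k q_def by (cases "nmult m x k \<ge> 2") auto
    qed
  qed
  show "\<And>j. 1 \<le> j \<Longrightarrow> j < npos m x \<Longrightarrow> lenR m x j \<le> lenR m x 1" using allgap q_def by auto
  show "lenL m x (npos m x) = lenR m x 1" using LqIp q_def by simp
  show "pos m x 1 + pos m x (npos m x) = 1" using sum q_def by simp
  show "lenL m x 1 = lenR m x 1 + c / 2" using V1(2) sum L1 by simp
  show "lenR m x (npos m x) = lenR m x 1 + c / 2" using Vq(2) sum Rq LqIp q_def by simp
  show "\<And>k. 1 < k \<Longrightarrow> k < npos m x \<Longrightarrow> nmult m x k = 2 \<Longrightarrow>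
        lenL m x k = lenR m x 1 \<and> lenR m x k = lenR m x 1" using interior q_def by auto
  show "\<And>k j. 1 \<le> k \<Longrightarrow> k \<le> npos m x \<Longrightarrow> nmult m x k = 1 \<Longrightarrow> 1 \<le> j \<Longrightarrow> j < npos m x \<Longrightarrow>
        lenR m x j \<le> lenI m x k"
  proof -
    fix k j assume k: "1 \<le> k" "k \<le> npos m x" and nk: "nmult m x k = 1" and j: "1 \<le> j" "j < npos m x"
    have k': "1 < k" "k < q" using k nk n1_2 nq_2 q_def by (auto simp: le_less)
    have Vk1: "V k = lenI m x k" using Vk[of k] k' nk by (simp add: lenI_LR)
    show "lenR m x j \<le> lenI m x k"
    proof (cases "j = k - 1 \<or> j = k")
      case True
      have "lenL m x k > 0" using LR[of "k - 1"] Rpos[of "k - 1"] k' by auto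
      moreover have "lenR m x k > 0" using Rpos[of k] k' by auto
      ultimately show ?thesis using True LR[of "k - 1"] k' by (auto simp: lenI_LR)
    next
      case False
      obtain i where i: "i < m" "x i = pos m x k" using obtain_cand[of k m x] k by blast
      have O: "x ` ({..<m} - {i}) = positions m x - {pos m x k}" by (rule O_eq1[OF i nk])
      have ne1: "pos m x j \<noteq> pos m x k" using pos_eq_iff[of j m x k] j k False by auto
      have ne2: "pos m x (j + 1) \<noteq> pos m x k" using pos_eq_iff[of "j + 1" m x k] j k False by auto
      have "payoff c m (x(i := (pos m x j + pos m x (j + 1)) / 2)) i = lenR m x j"
        by (rule devA_gap[OF prof i(1)]) (use j O pos_in ne1 ne2 in auto)
      moreover have "payoff c m (x(i := (pos m x j + pos m x (j + 1)) / 2)) i \<le> payoff c m x i"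
        using p01[of j] p01[of "j+1"] j q_def by (intro NE_dev[OF NE i(1)]) auto
      ultimately show ?thesis using Vpay[OF i(1) _ _ i(2)] k q_def Vk1 by simp
    qed
  qed
qed



lemma rbv_obtain:
  assumes "finite A" "\<exists>a\<in>A. p < a"
  obtains w where "w \<in> A" "p < w" "\<And>z. z \<in> A \<Longrightarrow> p < z \<Longrightarrow> w \<le> z" "rbv A p = (p + w) / 2"
proof -
  let ?w = "Min {a\<in>A. p < a}"
  have "?w \<in> {a\<in>A. p < a}" using assms by (intro Min_in) auto
  moreover have "\<And>z. z \<in> A \<Longrightarrow> p < z \<Longrightarrow> ?w \<le> z" using assms by (intro Min_le) auto
  ultimately show ?thesis using assms by (intro that[of ?w]) (auto simp: rbv_def)
qed

lemma lbv_obtain: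
  assumes "finite A" "\<exists>a\<in>A. a < p"
  obtains u where "u \<in> A" "u < p" "\<And>z. z \<in> A \<Longrightarrow> z < p \<Longrightarrow> z \<le> u" "lbv A p = (u + p) / 2"
proof -
  let ?u = "Max {a\<in>A. a < p}"
  have "?u \<in> {a\<in>A. a < p}" using assms by (intro Max_in) auto
  moreover have "\<And>z. z \<in> A \<Longrightarrow> z < p \<Longrightarrow> z \<le> ?u" using assms by (intro Max_ge) auto
  ultimately show ?thesis using assms by (intro that[of ?u]) (auto simp: lbv_def)
qed

lemma in_O:
  assumes "nmult m x k \<ge> 2"
  shows "pos m x k \<in> x ` ({..<m} - {i})"
proof (rule ccontr)
  assume nin: "\<not> ?thesis"
  have "{j. j < m \<and> x j = pos m x k} \<subseteq> {i}"
  proof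
    fix j assume j: "j \<in> {j. j < m \<and> x j = pos m x k}"
    show "j \<in> {i}"
    proof (rule ccontr)
      assume "j \<notin> {i}"
      then have "pos m x k \<in> x ` ({..<m} - {i})" using j by (intro image_eqI[of _ x j]) auto
      then show False using nin by simp
    qed
  qed
  then have "card {j. j < m \<and> x j = pos m x k} \<le> card {i}" by (intro card_mono) auto
  then show False using assms by (simp add: nmult_def)
qed

lemma div_le_half: "(n::nat) \<ge> 2 \<Longrightarrow> (N::real) \<ge> 0 \<Longrightarrow> N / real n \<le> N / 2"
  by (intro divide_left_mono) auto

lemma sufficiency:
  assumes prof: "is_profile m x" and q2: "npos m x \<ge> 2" and c0: "0 \<le> c" and c1: "c < 1"
    and h1: "\<And>k. 1 \<le> k \<Longrightarrow> k \<le> npos m x \<Longrightarrow> nmult m x k \<le> 2"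
    and n1: "nmult m x 1 = 2" and nq: "nmult m x (npos m x) = 2"
    and hLq: "lenL m x (npos m x) = lenR m x 1"
    and hint: "\<And>k. 1 < k \<Longrightarrow> k < npos m x \<Longrightarrow> nmult m x k = 2 \<Longrightarrow>
        lenL m x k = lenR m x 1 \<and> lenR m x k = lenR m x 1"
    and hL1: "lenL m x 1 = lenR m x 1 + c / 2" and hRq: "lenR m x (npos m x) = lenR m x 1 + c / 2"
    and hsing: "\<And>k. 1 \<le> k \<Longrightarrow> k \<le> npos m x \<Longrightarrow> nmult m x k = 1 \<Longrightarrow> lenL m x (npos m x) \<le> lenI m x k"
    and hgap: "\<And>j. 1 \<le> j \<Longrightarrow> j < npos m x \<Longrightarrow> lenR m x j \<le> lenR m x 1"
  shows "is_NE c m x"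
proof -
  define q where "q = npos m x"
  define Ip where "Ip = lenR m x 1"
  have q2': "q \<ge> 2" using q2 q_def by simp
  have qm: "1 \<le> q - 1" "q - 1 < q" using q2' by auto
  define V where "V k = (lenL m x k + lenR m x k) / real (nmult m x k)
     - c * (if k = 1 then 1 - (pos m x 1 + pos m x q) / 2
            else if k = q then (pos m x 1 + pos m x q) / 2 else 0) / real (nmult m x k)" for k
  have Vpay: "payoff c m x i = V k" if "i < m" "1 \<le> k" "k \<le> q" "x i = pos m x k" for i k
    using payoff_pos[OF prof q2 that(1)] that unfolding V_def q_def by (simp add: lenI_LR[symmetric] lenI_def)
  have p01: "0 \<le> pos m x k" "pos m x k \<le> 1" if "1 \<le> k" "k \<le> q" for k
    using pos_01[OF prof] that q_def by auto
  have plt: "pos m x k < pos m x k'" if "1 \<le> k" "k < k'" "k' \<le> q" for k k'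
    using pos_less that q_def by auto
  have p1q: "pos m x 1 < pos m x q" using plt q2' by auto
  have Rpos: "lenR m x j > 0" if "1 \<le> j" "j < q" for j using lenR_pos that q_def by auto
  have LR: "lenL m x (j + 1) = lenR m x j" if "1 \<le> j" "j < q" for j using lenL_R that q_def by auto
  have Ippos: "Ip > 0" unfolding Ip_def using Rpos[of 1] q2' by auto
  have gaps: "lenR m x j \<le> Ip" if "1 \<le> j" "j < q" for j using hgap that q_def Ip_def by auto
  have P1: "pos m x 1 = Ip + c / 2" using hL1 lenL_1[of m x] Ip_def by simp
  have Pq: "1 - pos m x q = Ip + c / 2" using hRq lenR_q[of m x] Ip_def q_def by simp
  have sum: "pos m x 1 + pos m x q = 1" using P1 Pq by simp
  have nge1: "nmult m x k \<ge> 1" if "1 \<le> k" "k \<le> q" for k using nmult_ge1 that q_def by auto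
  have Vge: "V k \<ge> Ip" and Vsing: "nmult m x k = 1 \<Longrightarrow> V k = lenI m x k"
    if k: "1 \<le> k" "k \<le> q" for k
  proof -
    have "V k \<ge> Ip \<and> (nmult m x k = 1 \<longrightarrow> V k = lenI m x k)"
    proof (cases "k = 1")
      case True
      have "V k = (Ip + c / 2 + Ip) / 2 - c * (1 / 2) / 2"
        unfolding V_def using True n1 sum hL1 Ip_def by simp
      then show ?thesis using True n1 by (simp add: field_simps)
    next
      case False
      show ?thesis
      proof (cases "k = q")
        case True
        have "V k = (Ip + (Ip + c / 2)) / 2 - c * (1 / 2) / 2"
          unfolding V_def using True False nq sum hLq hRq Ip_def q_def by simp
        then show ?thesis using True nq q_def by (simp add: field_simps)
      next
        case False2: False
        have Vk: "V k = (lenL m x k + lenR m x k) / real (nmult m x k)" unfolding V_def using False False2 by simp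
        have "nmult m x k = 1 \<or> nmult m x k = 2" using h1[of k] nge1[of k] k q_def by auto
        then show ?thesis
        proof
          assume n: "nmult m x k = 1"
          then have "V k = lenI m x k" using Vk by (simp add: lenI_LR)
          moreover have "lenL m x q \<le> lenI m x k" using hsing[of k] k n q_def by auto
          ultimately show ?thesis using hLq q_def Ip_def by simp
        next
          assume n: "nmult m x k = 2"
          then have "lenL m x k = Ip" "lenR m x k = Ip" using hint[of k] k False False2 q_def Ip_def by auto
          then show ?thesis using Vk n by simp
        qed
      qed
    qed
    then show "V k \<ge> Ip" "nmult m x k = 1 \<Longrightarrow> V k = lenI m x k" by auto
  qed
  show ?thesis
    unfolding is_NE_def
  proof (intro conjI prof allI impI ballI)
    fix i and t :: real assume i: "i < m" and t: "t \<in> {0..1}"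
    have "x i \<in> positions m x" using i by (simp add: positions_def)
    then obtain k where k: "1 \<le> k" "k \<le> q" "x i = pos m x k" using in_pos q_def by metis
    define Oth where "Oth = x ` ({..<m} - {i})"
    have finO: "finite Oth" unfolding Oth_def by simp
    have Osub: "Oth \<subseteq> positions m x" unfolding Oth_def by (rule O_sub)
    have p1O: "pos m x 1 \<in> Oth" unfolding Oth_def using n1 by (intro in_O) auto
    have pqO: "pos m x q \<in> Oth" unfolding Oth_def q_def using nq by (intro in_O) auto
    have Obnd: "pos m x 1 \<le> z" "z \<le> pos m x q" if "z \<in> Oth" for z
      using pos_bounds Osub that q_def by auto
    have Vi: "payoff c m x i = V k" by (rule Vpay[OF i k(1,2) k(3)])
    have G: "(w - u) / 2 \<le> V k" if uw: "u \<in> Oth" "w \<in> Oth" "u < w" and nb: "\<And>z. z \<in> Oth \<Longrightarrow> \<not> (u < z \<and> z < w)" for u w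
    proof (cases "\<exists>z\<in>positions m x. u < z \<and> z < w")
      case False
      obtain j where j: "1 \<le> j" "j < npos m x" "u = pos m x j" "w = pos m x (j + 1)"
        using consec_pos[of u m x w] uw Osub False by blast
      have "(w - u) / 2 = lenR m x j" using j lenR_k[of j m x] by simp
      then show ?thesis using gaps[of j] j Vge[OF k(1,2)] q_def by simp
    next
      case True
      then obtain z where z: "z \<in> positions m x" "u < z" "z < w" by blast
      have zO: "z \<notin> Oth" using nb z by blast
      obtain l where l: "l < m" "z = x l" using z(1) by (auto simp: positions_def)
      have "l = i" using zO l unfolding Oth_def by auto
      then have zk: "z = pos m x k" using l k by simp
      have nk: "nmult m x k = 1"
      proof (rule ccontr)
        assume "nmult m x k \<noteq> 1"
        then have "nmult m x k \<ge> 2" using nge1[OF k(1,2)] by simp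
        then have "z \<in> Oth" using zk in_O[of m x k i] unfolding Oth_def by simp
        then show False using zO by simp
      qed
      have k': "1 < k" "k < q" using k nk n1 nq q_def by (auto simp: le_less)
      have O1: "Oth = positions m x - {pos m x k}" unfolding Oth_def by (rule O_eq1[OF i k(3) nk])
      have km: "1 \<le> k - 1" "k - 1 < k" "k + 1 \<le> q" "k - 1 \<le> q" using k' by auto
      have "pos m x (k - 1) < pos m x k" using plt[of "k - 1" k] km k' by auto
      moreover have "pos m x (k - 1) \<in> positions m x" using pos_in[of "k - 1" m x] km q_def by auto
      ultimately have pkm: "pos m x (k - 1) \<in> Oth" using O1 by auto
      have "pos m x k < pos m x (k + 1)" using plt[of k "k + 1"] km k' by auto
      moreover have "pos m x (k + 1) \<in> positions m x" using pos_in[of "k + 1" m x] km q_def by auto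
      ultimately have pkp: "pos m x (k + 1) \<in> Oth" using O1 by auto
      have "pos m x (k - 1) \<le> u"
      proof (rule ccontr)
        assume "\<not> ?thesis"
        then show False using nb[OF pkm] plt[of "k - 1" k] km k' z zk by auto
      qed
      moreover have "w \<le> pos m x (k + 1)"
      proof (rule ccontr)
        assume "\<not> ?thesis"
        then show False using nb[OF pkp] plt[of k "k + 1"] k' z zk by auto
      qed
      moreover have "lenI m x k = (pos m x (k + 1) - pos m x (k - 1)) / 2"
        using k' lenL_k[of k m x] lenR_k[of k m x] q_def by (simp add: lenI_LR field_simps)
      ultimately show ?thesis using Vsing[OF k(1,2) nk] by simp
    qed
    have dev_le: "payoff c m (x(i := t)) i \<le> V k"
    proof -
      consider (L) "t < pos m x 1" | (R) "pos m x q < t" | (E) "t \<in> Oth"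
        | (M) "pos m x 1 < t" "t < pos m x q" "t \<notin> Oth"
        using p1O pqO by (metis linorder_neqE_linordered_idom)
      then show ?thesis
      proof cases
        case L
        have D: "payoff c m (x(i := t)) i = (t + pos m x 1) / 2 - c * (1 - (t + pos m x q) / 2)"
          by (rule devB[OF prof i t p1O[unfolded Oth_def] pqO[unfolded Oth_def]])
             (use L Obnd Oth_def in \<open>fastforce+\<close>)
        have e1: "2 * payoff c m (x(i := t)) i = t + pos m x 1 - 2 * c + c * t + c * pos m x q"
          using D by (simp add: field_simps)
        have "c * (pos m x 1 + pos m x q) = c" using sum by simp
        then have e2: "c * pos m x q = c - c * pos m x 1" by (simp add: distrib_left)
        have e3: "c * t \<le> c * pos m x 1" using c0 L by (intro mult_left_mono) auto
        have "payoff c m (x(i := t)) i \<le> Ip" using e1 e2 e3 P1 L by linarith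
        then show ?thesis using Vge[OF k(1,2)] by simp
      next
        case R
        have D: "payoff c m (x(i := t)) i = 1 - (pos m x q + t) / 2 - c * ((pos m x 1 + t) / 2)"
          by (rule devC[OF prof i t p1O[unfolded Oth_def] pqO[unfolded Oth_def]])
             (use R Obnd Oth_def in \<open>fastforce+\<close>)
        have e1: "2 * payoff c m (x(i := t)) i = 2 - pos m x q - t - c * pos m x 1 - c * t"
          using D by (simp add: field_simps)
        have "c * (pos m x 1 + pos m x q) = c" using sum by simp
        then have e2: "c * pos m x 1 = c - c * pos m x q" by (simp add: distrib_left)
        have e3: "c * pos m x q \<le> c * t" using c0 R by (intro mult_left_mono) auto
        have "payoff c m (x(i := t)) i \<le> Ip" using e1 e2 e3 Pq R by linarith
        then show ?thesis using Vge[OF k(1,2)] by simp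
      next
        case E
        have mnO: "Min Oth = pos m x 1" using finO p1O Obnd by (intro Min_eqI) auto
        have mxO: "Max Oth = pos m x q" using finO pqO Obnd by (intro Max_eqI) auto
        have lohi: "Min Oth < Max Oth" using mnO mxO p1q by simp
        define n' where "n' = mltp m (x(i := t)) t"
        have D: "payoff c m (x(i := t)) i = (rbv Oth t - lbv Oth t - c * Lam Oth t) / real n'"
          using devEq(1)[OF prof i t E[unfolded Oth_def] lohi[unfolded Oth_def]] unfolding Oth_def n'_def
          by (simp add: diff_divide_distrib)
        have n2: "n' \<ge> 2" using devEq(2)[OF prof i t E[unfolded Oth_def] lohi[unfolded Oth_def]] unfolding n'_def .
        have tb: "pos m x 1 \<le> t" "t \<le> pos m x q" using Obnd E by auto
        have num: "0 \<le> rbv Oth t - lbv Oth t - c * Lam Oth t \<and> rbv Oth t - lbv Oth t - c * Lam Oth t \<le> 2 * V k"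
        proof (cases "t = pos m x 1")
          case True
          have lb: "lbv Oth t = 0" using Obnd True by (intro lbv_none) (auto simp: not_less)
          have La: "Lam Oth t = 1 / 2" using True mnO mxO sum by (simp add: Lam_def)
          have "\<exists>a\<in>Oth. t < a" using pqO True p1q by (intro bexI[of _ "pos m x q"]) auto
          then obtain w where w: "w \<in> Oth" "t < w" "\<And>z. z \<in> Oth \<Longrightarrow> t < z \<Longrightarrow> w \<le> z" "rbv Oth t = (t + w) / 2"
            by (rule rbv_obtain[OF finO]) blast
          have "(w - t) / 2 \<le> V k" using G[OF E w(1) w(2)] w(3) by force
          moreover have "rbv Oth t - lbv Oth t - c * Lam Oth t = Ip + (w - t) / 2"
            using lb La w(4) True P1 by (simp add: field_simps)
          moreover have "(w - t) / 2 > 0" using w(2) by simp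
          ultimately show ?thesis using Ippos Vge[OF k(1,2)] by linarith
        next
          case False
          show ?thesis
          proof (cases "t = pos m x q")
            case True
            have rb: "rbv Oth t = 1" using Obnd True by (intro rbv_none) (auto simp: not_less)
            have La: "Lam Oth t = 1 / 2" using True mnO mxO sum p1q by (auto simp: Lam_def)
            have "\<exists>a\<in>Oth. a < t" using p1O True p1q by (intro bexI[of _ "pos m x 1"]) auto
            then obtain u where u: "u \<in> Oth" "u < t" "\<And>z. z \<in> Oth \<Longrightarrow> z < t \<Longrightarrow> z \<le> u" "lbv Oth t = (u + t) / 2"
              by (rule lbv_obtain[OF finO]) blast
            have "(t - u) / 2 \<le> V k" using G[OF u(1) E u(2)] u(3) by force
            moreover have "rbv Oth t - lbv Oth t - c * Lam Oth t = Ip + (t - u) / 2"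
              using rb La u(4) True Pq by (simp add: field_simps)
            moreover have "(t - u) / 2 > 0" using u(2) by simp
            ultimately show ?thesis using Ippos Vge[OF k(1,2)] by linarith
          next
            case False2: False
            have La: "Lam Oth t = 0" using False False2 mnO mxO by (simp add: Lam_def)
            have "\<exists>a\<in>Oth. t < a" using pqO False2 tb by (intro bexI[of _ "pos m x q"]) auto
            then obtain w where w: "w \<in> Oth" "t < w" "\<And>z. z \<in> Oth \<Longrightarrow> t < z \<Longrightarrow> w \<le> z" "rbv Oth t = (t + w) / 2"
              by (rule rbv_obtain[OF finO]) blast
            have "\<exists>a\<in>Oth. a < t" using p1O False tb by (intro bexI[of _ "pos m x 1"]) auto
            then obtain u where u: "u \<in> Oth" "u < t" "\<And>z. z \<in> Oth \<Longrightarrow> z < t \<Longrightarrow> z \<le> u" "lbv Oth t = (u + t) / 2"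
              by (rule lbv_obtain[OF finO]) blast
            have "(w - t) / 2 \<le> V k" using G[OF E w(1) w(2)] w(3) by force
            moreover have "(t - u) / 2 \<le> V k" using G[OF u(1) E u(2)] u(3) by force
            moreover have "rbv Oth t - lbv Oth t - c * Lam Oth t = (w - t) / 2 + (t - u) / 2"
              using La u(4) w(4) by (simp add: field_simps)
            moreover have "(t - u) / 2 > 0" "(w - t) / 2 > 0" using u(2) w(2) by simp_all
            ultimately show ?thesis by linarith
          qed
        qed
        have "payoff c m (x(i := t)) i \<le> (rbv Oth t - lbv Oth t - c * Lam Oth t) / 2"
          unfolding D by (rule div_le_half[OF n2]) (use num in simp)
        then show ?thesis using num by simp
      next
        case M
        have "\<exists>a\<in>Oth. t < a" using pqO M by (intro bexI[of _ "pos m x q"]) auto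
        then obtain w where w: "w \<in> Oth" "t < w" "\<And>z. z \<in> Oth \<Longrightarrow> t < z \<Longrightarrow> w \<le> z" "rbv Oth t = (t + w) / 2"
          by (rule rbv_obtain[OF finO]) blast
        have "\<exists>a\<in>Oth. a < t" using p1O M by (intro bexI[of _ "pos m x 1"]) auto
        then obtain u where u: "u \<in> Oth" "u < t" "\<And>z. z \<in> Oth \<Longrightarrow> z < t \<Longrightarrow> z \<le> u" "lbv Oth t = (u + t) / 2"
          by (rule lbv_obtain[OF finO]) blast
        have nb: "\<not> (u < z \<and> z < w)" if "z \<in> Oth" for z
          using that u(3)[of z] w(3)[of z] M(3) by (cases "z < t"; cases "t < z") auto
        have "payoff c m (x(i := t)) i = (w - u) / 2"
          by (rule devA[OF prof i t u(1)[unfolded Oth_def] w(1)[unfolded Oth_def] u(2) w(2)])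
             (use nb Oth_def in auto)
        then show ?thesis using G[OF u(1) w(1)] nb u(2) w(2) by force
      qed
    qed
    then show "payoff c m (x(i := t)) i \<le> payoff c m x i" using Vi by simp
  qed
qed



lemma fwd:
  fixes c :: real and m :: nat and x :: "nat \<Rightarrow> real"
  assumes "m \<ge> 2" and "0 \<le> c" and "c < 1"
    and "is_profile m x"
    and "npos m x \<ge> 2"
    and NCNE: "is_NCNE c m x"
  shows "((\<forall>k\<in>{1..npos m x}. nmult m x k \<le> 2) \<and> nmult m x 1 = 2 \<and> nmult m x (npos m x) = 2) \<and>
      (lenL m x (npos m x) = lenR m x 1 \<and>
        (\<forall>k. 1 < k \<and> k < npos m x \<and> nmult m x k = 2 \<longrightarrow> lenL m x k = lenR m x 1 \<and> lenR m x k = lenR m x 1)) \<and>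
      (lenL m x 1 = lenR m x 1 + c / 2 \<and> lenR m x (npos m x) = lenR m x 1 + c / 2) \<and>
      (\<forall>i\<in>{1..npos m x}. nmult m x i = 1 \<longrightarrow>
          (\<forall>k\<in>{1..npos m x}. k \<noteq> 1 \<longrightarrow> lenL m x k \<le> lenI m x i) \<and>
          (\<forall>k\<in>{1..npos m x}. k \<noteq> npos m x \<longrightarrow> lenR m x k \<le> lenI m x i)) \<and>
      (\<forall>k\<in>{1..npos m x}. (k \<noteq> 1 \<longrightarrow> lenL m x k \<le> lenR m x 1) \<and> (k \<noteq> npos m x \<longrightarrow> lenR m x k \<le> lenR m x 1))"
proof -
  note prof = assms(4) and q2 = assms(5) and c0 = assms(2) and c1 = assms(3)
  have LRk: "lenL m x k = lenR m x (k - 1)" if "1 < k" "k \<le> npos m x" for k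
    using lenL_R[of "k - 1" m x] that by simp
  have NE: "is_NE c m x" using NCNE by (simp add: is_NCNE_def)
  note F = necessity_facts[OF prof q2 c0 c1 NE]
  show ?thesis
    proof (intro conjI ballI allI impI)
    fix k assume "k \<in> {1..npos m x}" then show "nmult m x k \<le> 2" using F(3) by auto
  next
    show "nmult m x 1 = 2" "nmult m x (npos m x) = 2" using F(1,2) by auto
  next
    show "lenL m x (npos m x) = lenR m x 1" using F(5) .
  next
    fix k assume "1 < k \<and> k < npos m x \<and> nmult m x k = 2"
    then show "lenL m x k = lenR m x 1" "lenR m x k = lenR m x 1" using F(9)[of k] by auto
  next
    show "lenL m x 1 = lenR m x 1 + c / 2" "lenR m x (npos m x) = lenR m x 1 + c / 2" using F(7,8) by auto
  next
    fix i k assume i: "i \<in> {1..npos m x}" "nmult m x i = 1" and k: "k \<in> {1..npos m x}" "k \<noteq> 1"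
    then show "lenL m x k \<le> lenI m x i" using F(10)[of i "k - 1"] LRk[of k] by auto
  next
    fix i k assume i: "i \<in> {1..npos m x}" "nmult m x i = 1" and k: "k \<in> {1..npos m x}" "k \<noteq> npos m x"
    then show "lenR m x k \<le> lenI m x i" using F(10)[of i k] by auto
  next
    fix k assume k: "k \<in> {1..npos m x}" "k \<noteq> 1"
    then show "lenL m x k \<le> lenR m x 1" using F(4)[of "k - 1"] LRk[of k] by auto
  next
    fix k assume k: "k \<in> {1..npos m x}" "k \<noteq> npos m x"
    then show "lenR m x k \<le> lenR m x 1" using F(4)[of k] by auto
  qed
qed

lemma bwd:
  fixes c :: real and m :: nat and x :: "nat \<Rightarrow> real"
  assumes "m \<ge> 2" and "0 \<le> c" and "c < 1"
    and "is_profile m x"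
    and "npos m x \<ge> 2"
    and H': "((\<forall>k\<in>{1..npos m x}. nmult m x k \<le> 2) \<and> nmult m x 1 = 2 \<and> nmult m x (npos m x) = 2) \<and>
      (lenL m x (npos m x) = lenR m x 1 \<and>
        (\<forall>k. 1 < k \<and> k < npos m x \<and> nmult m x k = 2 \<longrightarrow> lenL m x k = lenR m x 1 \<and> lenR m x k = lenR m x 1)) \<and>
      (lenL m x 1 = lenR m x 1 + c / 2 \<and> lenR m x (npos m x) = lenR m x 1 + c / 2) \<and>
      (\<forall>i\<in>{1..npos m x}. nmult m x i = 1 \<longrightarrow>
          (\<forall>k\<in>{1..npos m x}. k \<noteq> 1 \<longrightarrow> lenL m x k \<le> lenI m x i) \<and>
          (\<forall>k\<in>{1..npos m x}. k \<noteq> npos m x \<longrightarrow> lenR m x k \<le> lenI m x i)) \<and>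
      (\<forall>k\<in>{1..npos m x}. (k \<noteq> 1 \<longrightarrow> lenL m x k \<le> lenR m x 1) \<and> (k \<noteq> npos m x \<longrightarrow> lenR m x k \<le> lenR m x 1))"
  shows "is_NCNE c m x"
proof -
  note prof = assms(4) and q2 = assms(5) and c0 = assms(2) and c1 = assms(3)
  have LRk: "lenL m x k = lenR m x (k - 1)" if "1 < k" "k \<le> npos m x" for k
    using lenL_R[of "k - 1" m x] that by simp
  have NE: "is_NE c m x"
  proof (rule sufficiency[OF prof q2 c0 c1])
    show "\<And>k. 1 \<le> k \<Longrightarrow> k \<le> npos m x \<Longrightarrow> nmult m x k \<le> 2" using H' by auto
    show "nmult m x 1 = 2" "nmult m x (npos m x) = 2" using H' by auto
    show "lenL m x (npos m x) = lenR m x 1" using H' by auto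
    show "\<And>k. 1 < k \<Longrightarrow> k < npos m x \<Longrightarrow> nmult m x k = 2 \<Longrightarrow>
      lenL m x k = lenR m x 1 \<and> lenR m x k = lenR m x 1" using H' by auto
    show "lenL m x 1 = lenR m x 1 + c / 2" "lenR m x (npos m x) = lenR m x 1 + c / 2" using H' by auto
    show "\<And>k. 1 \<le> k \<Longrightarrow> k \<le> npos m x \<Longrightarrow> nmult m x k = 1 \<Longrightarrow> lenL m x (npos m x) \<le> lenI m x k"
    proof -
      fix k assume "1 \<le> k" "k \<le> npos m x" "nmult m x k = 1"
      then show "lenL m x (npos m x) \<le> lenI m x k" using H' q2 by auto
    qed
    show "\<And>j. 1 \<le> j \<Longrightarrow> j < npos m x \<Longrightarrow> lenR m x j \<le> lenR m x 1" using H' by auto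
  qed
  obtain i where i: "i < m" "x i = pos m x 1" using obtain_cand[of 1 m x] q2
    by (metis le_refl one_le_numeral order_trans)
  obtain j where j: "j < m" "x j = pos m x (npos m x)" using obtain_cand[of "npos m x" m x] q2
    by (metis le_refl one_le_numeral order_trans)
  have "pos m x 1 < pos m x (npos m x)" using q2 by (intro pos_less) auto
  then have "x i \<noteq> x j" using i j by simp
  then show "is_NCNE c m x" using NE i(1) j(1) unfolding is_NCNE_def by blast
qed

theorem theorem1:
  fixes c :: real and m :: nat and x :: "nat \<Rightarrow> real"
  assumes "m \<ge> 2" and "0 \<le> c" and "c < 1"
    and "is_profile m x"
    and "npos m x \<ge> 2"
  shows "is_NCNE c m x \<longleftrightarrow>
    (let q = npos m x; Ip = lenR m x 1 in
      ((\<forall>k\<in>{1..q}. nmult m x k \<le> 2) \<and> nmult m x 1 = 2 \<and> nmult m x q = 2) \<and>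
      (lenL m x q = Ip \<and>
        (\<forall>k. 1 < k \<and> k < q \<and> nmult m x k = 2 \<longrightarrow> lenL m x k = Ip \<and> lenR m x k = Ip)) \<and>
      (lenL m x 1 = Ip + c / 2 \<and> lenR m x q = Ip + c / 2) \<and>
      (\<forall>i\<in>{1..q}. nmult m x i = 1 \<longrightarrow>
          (\<forall>k\<in>{1..q}. k \<noteq> 1 \<longrightarrow> lenL m x k \<le> lenI m x i) \<and>
          (\<forall>k\<in>{1..q}. k \<noteq> q \<longrightarrow> lenR m x k \<le> lenI m x i)) \<and>
      (\<forall>k\<in>{1..q}. (k \<noteq> 1 \<longrightarrow> lenL m x k \<le> Ip) \<and> (k \<noteq> q \<longrightarrow> lenR m x k \<le> Ip)))"
  using fwd[OF assms] bwd[OF assms] unfolding Let_def by blast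


end
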